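(* The operators $\partial_{\underline z}$, $\partial_{\underline z}^\dagger$, $\partial_{\underline z}^J$ and $\partial_{\underline z}^{\dagger J}$ are invariant under the action of the symplectic group $\mathrm{Sp}(p)\cong\mathrm{Spin}_{\mathbb Q}(4p)$, i.e. each of them commutes with $L(s)$ for every $s\in\mathrm{Spin}_{\mathbb Q}(4p)$.
   Context: Coordinates on $\mathbb{R}^{4p}$: $(X_1,\dots,X_{4p})=(x_1,y_1,\dots,x_{2p},y_{2p})$, $\underline X=\sum_\alpha e_\alpha X_\alpha$, $\partial_{z_k}=\tfrac12(\partial_{x_k}-i\partial_{y_k})$, $\partial_{\bar z_k}=\tfrac12(\partial_{x_k}+i\partial_{y_k})$. $\mathbb{C}_{4p}$ is the complex Clifford algebra generated by $e_1,\dots,e_{4p}$ with $e_\alpha e_\beta+e_\beta e_\alpha=-2\delta_{\alpha\beta}$. Witt basis: $\mathfrak f_k=\tfrac12(-e_{2k-1}+ie_{2k})$, $\mathfrak f_k^\dagger=\tfrac12(e_{2k-1}+ie_{2k})$, $k=1,\dots,2p$. $I=\prod_k\mathfrak f_k\mathfrak f_k^\dagger$, spinor space $\mathbb S=\mathbb C_{4p}I$. Operators on $\mathbb S$-valued functions (left multiplication): $\partial_{\underline z}=\sum_{k}\mathfrak f_k^\dagger\partial_{z_k}$, $\partial_{\underline z}^\dagger=\sum_{k}\mathfrak f_k\partial_{\bar z_k}$, $\partial_{\underline z}^J=\sum_{j=1}^p(\mathfrak f_{2j-1}\partial_{z_{2j}}-\mathfrak f_{2j}\partial_{z_{2j-1}})$,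 $\partial_{\underline z}^{\dagger J}=\sum_{j=1}^p(\mathfrak f^\dagger_{2j-1}\partial_{\bar z_{2j}}-\mathfrak f^\dagger_{2j}\partial_{\bar z_{2j-1}})$. $\mathrm{Spin}_{\mathbb Q}(4p)$ is the subgroup of $\mathrm{Spin}(4p)$ of elements commuting with both $s_{\mathbb I}=\prod_{j=1}^{2p}\tfrac{\sqrt2}{2}(1+e_{2j-1}e_{2j})$ and $s_{\mathbb J}=\prod_{j=1}^p\tfrac12(1+e_{4j-3}e_{4j-1})(1-e_{4j-2}e_{4j})$; it doubly covers the subgroup of $\mathrm{SO}(4p)$ commuting with the complex structures $\mathbb I,\mathbb J$ (where $\mathbb{I}(e_{2k-1})=e_{2k}$, $\mathbb{I}(e_{2k})=-e_{2k-1}$, $\mathbb{J}(e_{4j-3})=e_{4j-1}$, $\mathbb{J}(e_{4j-2})=-e_{4j}$, $\mathbb{J}(e_{4j-1})=-e_{4j-3}$, $\mathbb{J}(e_{4j})=e_{4j-2}$), which is isomorphic to $\mathrm{Sp}(p)$. The $L$-action of $s\in\mathrm{Spin}(4p)$ on an $\mathbb S$-valued function $F$ is $L(s)[F](\underline X)=s\,F(s^{-1}\underline Xs)$. *)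

theory Defs
  imports "HOL-Analysis.Analysis"
begin

text \<open>Complex Clifford algebra on generators indexed by a finite linearly ordered type 'n
  (with CARD('n) = 4p). An element is given by its coefficients on the basis blades
  e_A (A a subset of 'n, factors in increasing order), so the algebra is the
  finite-dimensional normed space complex ^ ('n set).\<close>

type_synonym 'n cl = "complex ^ ('n set)"

definition cl_blade :: "'n::finite set \<Rightarrow> 'n cl" where
  "cl_blade A = (\<chi> B. if B = A then 1 else 0)"

text \<open>Sign of e_A e_B = sign * e_(A symdiff B), using e_i e_j = - e_j e_i (i \<noteq> j), e_i^2 = -1.\<close>
definition cl_sign :: "'n::{finite,linorder} set \<Rightarrow> 'n set \<Rightarrow> complex" where
  "cl_sign A B = (-1) ^ (card {(a,b). a \<in> A \<and> b \<in> B \<and> b < a} + card (A \<inter> B))"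

definition cl_mul :: "'n::{finite,linorder} cl \<Rightarrow> 'n cl \<Rightarrow> 'n cl" where
  "cl_mul x y = (\<chi> C. \<Sum>A\<in>UNIV. \<Sum>B\<in>UNIV.
       if (A - B) \<union> (B - A) = C then cl_sign A B * (x $ A) * (y $ B) else 0)"

definition cl_one :: "'n::finite cl" where
  "cl_one = cl_blade {}"

definition cl_prod :: "'n::{finite,linorder} cl list \<Rightarrow> 'n cl" where
  "cl_prod xs = foldr cl_mul xs cl_one"

definition cl_inv :: "'n::{finite,linorder} cl \<Rightarrow> 'n cl" where
  "cl_inv s = (THE t. cl_mul s t = cl_one \<and> cl_mul t s = cl_one)"

text \<open>Coordinates: X_alpha (alpha = 1..4p) is the component of X at the alpha-th element of 'n.\<close>
definition ix :: "nat \<Rightarrow> 'n::{finite,linorder}" where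
  "ix \<alpha> = sorted_list_of_set (UNIV :: 'n set) ! (\<alpha> - 1)"

definition cl_gen :: "nat \<Rightarrow> 'n::{finite,linorder} cl" where
  "cl_gen \<alpha> = cl_blade {ix \<alpha>}"

definition cl_vec :: "(real, 'n) vec \<Rightarrow> 'n::finite cl" where
  "cl_vec X = (\<Sum>i\<in>UNIV. complex_of_real (X $ i) *s cl_blade {i})"

definition cl_unvec :: "'n::finite cl \<Rightarrow> (real, 'n) vec" where
  "cl_unvec x = (\<chi> i. Re (x $ {i}))"

definition witt_f :: "nat \<Rightarrow> 'n::{finite,linorder} cl" where
  "witt_f k = (1/2 :: complex) *s (- cl_gen (2*k-1) + \<i> *s cl_gen (2*k))"

definition witt_fd :: "nat \<Rightarrow> 'n::{finite,linorder} cl" where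
  "witt_fd k = (1/2 :: complex) *s (cl_gen (2*k-1) + \<i> *s cl_gen (2*k))"

definition prim_idem :: "nat \<Rightarrow> 'n::{finite,linorder} cl" where
  "prim_idem p = cl_prod (map (\<lambda>k. cl_mul (witt_f k) (witt_fd k)) [1..<2*p+1])"

definition spinor_space :: "nat \<Rightarrow> 'n::{finite,linorder} cl set" where
  "spinor_space p = {cl_mul a (prim_idem p) | a. True}"

definition spin_group :: "'n::{finite,linorder} cl set" where
  "spin_group = {cl_prod (map cl_vec ws) | ws :: ((real, 'n::{finite,linorder}) vec) list.
                   even (length ws) \<and> (\<forall>w \<in> set ws. norm w = 1)}"

definition s_I :: "nat \<Rightarrow> 'n::{finite,linorder} cl" where
  "s_I p = cl_prod (map (\<lambda>j. complex_of_real (sqrt 2 / 2) *s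
              (cl_one + cl_mul (cl_gen (2*j-1)) (cl_gen (2*j)))) [1..<2*p+1])"

definition s_J :: "nat \<Rightarrow> 'n::{finite,linorder} cl" where
  "s_J p = cl_prod (map (\<lambda>j. cl_mul ((1/2 :: complex) *s (cl_one + cl_mul (cl_gen (4*j-3)) (cl_gen (4*j-1))))
                                      (cl_one - cl_mul (cl_gen (4*j-2)) (cl_gen (4*j)))) [1..<p+1])"

definition spinQ :: "nat \<Rightarrow> 'n::{finite,linorder} cl set" where
  "spinQ p = {s \<in> spin_group. cl_mul s (s_I p) = cl_mul (s_I p) s \<and> cl_mul s (s_J p) = cl_mul (s_J p) s}"

definition Lact :: "'n cl \<Rightarrow> ((real, 'n) vec \<Rightarrow> 'n::{finite,linorder} cl) \<Rightarrow> (real, 'n) vec \<Rightarrow> 'n cl" where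
  "Lact s F X = cl_mul s (F (cl_unvec (cl_mul (cl_mul (cl_inv s) (cl_vec X)) s)))"

definition pd :: "nat \<Rightarrow> ((real, 'n) vec \<Rightarrow> 'n::{finite,linorder} cl) \<Rightarrow> (real, 'n) vec \<Rightarrow> 'n cl" where
  "pd \<alpha> F X = frechet_derivative F (at X) (axis (ix \<alpha>) 1)"

definition dz :: "nat \<Rightarrow> ((real, 'n) vec \<Rightarrow> 'n::{finite,linorder} cl) \<Rightarrow> (real, 'n) vec \<Rightarrow> 'n cl" where
  "dz k F X = (1/2 :: complex) *s (pd (2*k-1) F X - \<i> *s pd (2*k) F X)"

definition dzb :: "nat \<Rightarrow> ((real, 'n) vec \<Rightarrow> 'n::{finite,linorder} cl) \<Rightarrow> (real, 'n) vec \<Rightarrow> 'n cl" where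
  "dzb k F X = (1/2 :: complex) *s (pd (2*k-1) F X + \<i> *s pd (2*k) F X)"

definition Dz :: "nat \<Rightarrow> ((real, 'n) vec \<Rightarrow> 'n::{finite,linorder} cl) \<Rightarrow> (real, 'n) vec \<Rightarrow> 'n cl" where
  "Dz p F X = (\<Sum>k=1..2*p. cl_mul (witt_fd k) (dz k F X))"

definition Dz_dag :: "nat \<Rightarrow> ((real, 'n) vec \<Rightarrow> 'n::{finite,linorder} cl) \<Rightarrow> (real, 'n) vec \<Rightarrow> 'n cl" where
  "Dz_dag p F X = (\<Sum>k=1..2*p. cl_mul (witt_f k) (dzb k F X))"

definition Dz_J :: "nat \<Rightarrow> ((real, 'n) vec \<Rightarrow> 'n::{finite,linorder} cl) \<Rightarrow> (real, 'n) vec \<Rightarrow> 'n cl" where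
  "Dz_J p F X = (\<Sum>j=1..p. cl_mul (witt_f (2*j-1)) (dz (2*j) F X) - cl_mul (witt_f (2*j)) (dz (2*j-1) F X))"

definition Dz_dag_J :: "nat \<Rightarrow> ((real, 'n) vec \<Rightarrow> 'n::{finite,linorder} cl) \<Rightarrow> (real, 'n) vec \<Rightarrow> 'n cl" where
  "Dz_dag_J p F X = (\<Sum>j=1..p. cl_mul (witt_fd (2*j-1)) (dzb (2*j) F X) - cl_mul (witt_fd (2*j)) (dzb (2*j-1) F X))"

end

theory Submission
  imports Defs
begin

notation cl_mul (infixl "\<star>" 70)

lemma cl_mul_nth: "(x \<star> y) $ C = (\<Sum>A\<in>UNIV. cl_sign A (A - C \<union> (C - A)) * x $ A * y $ (A - C \<union> (C - A)))"
proof -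
  have "\<And>A. (\<Sum>B\<in>UNIV. if (A - B) \<union> (B - A) = C then cl_sign A B * x $ A * y $ B else 0)
        = cl_sign A (A - C \<union> (C - A)) * x $ A * y $ (A - C \<union> (C - A))"
  proof -
    fix A :: "'a set"
    have "\<And>B. ((A - B) \<union> (B - A) = C) = (B = A - C \<union> (C - A))" by blast
    then show "?thesis A" by (simp add: sum.delta)
  qed
  then show ?thesis by (simp add: cl_mul_def)
qed

lemma cl_mul_add_left: "(x + y) \<star> z = x \<star> z + y \<star> z"
  by (simp add: vec_eq_iff cl_mul_nth sum.distrib algebra_simps)
lemma cl_mul_add_right: "z \<star> (x + y) = z \<star> x + z \<star> y"
  by (simp add: vec_eq_iff cl_mul_nth sum.distrib algebra_simps)
lemma cl_mul_smult_left: "(c *s x) \<star> z = c *s (x \<star> z)"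
  by (simp add: vec_eq_iff cl_mul_nth sum_distrib_left algebra_simps)
lemma cl_mul_smult_right: "z \<star> (c *s x) = c *s (z \<star> x)"
  by (simp add: vec_eq_iff cl_mul_nth sum_distrib_left algebra_simps)
lemma scaleR_cl: "c *\<^sub>R (x::'n::finite cl) = complex_of_real c *s x"
  unfolding vec_eq_iff vector_scaleR_component vector_smult_component by (simp add: scaleR_conv_of_real)
lemma cl_mul_scaleR_left: "(c *\<^sub>R x) \<star> z = c *\<^sub>R (x \<star> z)"
  by (simp add: scaleR_cl cl_mul_smult_left)
lemma cl_mul_scaleR_right: "z \<star> (c *\<^sub>R x) = c *\<^sub>R (z \<star> x)"
  by (simp add: scaleR_cl cl_mul_smult_right)
lemma cl_mul_zero_left[simp]: "0 \<star> z = 0"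
  by (simp add: vec_eq_iff cl_mul_nth)
lemma cl_mul_zero_right[simp]: "z \<star> 0 = 0"
  by (simp add: vec_eq_iff cl_mul_nth)
lemma cl_mul_minus_left: "(- x) \<star> z = - (x \<star> z)"
  by (simp add: vec_eq_iff cl_mul_nth sum_negf)
lemma cl_mul_minus_right: "z \<star> (- x) = - (z \<star> x)"
  by (simp add: vec_eq_iff cl_mul_nth sum_negf)
lemma cl_mul_diff_left: "(x - y) \<star> z = x \<star> z - y \<star> z"
  by (simp add: vec_eq_iff cl_mul_nth sum_subtractf algebra_simps)
lemma cl_mul_diff_right: "z \<star> (x - y) = z \<star> x - z \<star> y"
  by (simp add: vec_eq_iff cl_mul_nth sum_subtractf algebra_simps)
lemma cl_mul_sum_left: "(\<Sum>i\<in>I. f i) \<star> z = (\<Sum>i\<in>I. f i \<star> z)"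
  by (induction I rule: infinite_finite_induct) (auto simp: cl_mul_add_left)
lemma cl_mul_sum_right: "z \<star> (\<Sum>i\<in>I. f i) = (\<Sum>i\<in>I. z \<star> f i)"
  by (induction I rule: infinite_finite_induct) (auto simp: cl_mul_add_right)

lemma cl_eqI: "(\<And>i. x $ i = y $ i) \<Longrightarrow> x = y" by (simp add: vec_eq_iff)

lemma cl_blade_nth: "cl_blade A $ B = (if B = A then 1 else 0)"
  by (simp add: cl_blade_def)

lemma cl_expand: "x = (\<Sum>A\<in>UNIV. x $ A *s cl_blade (A::'n::finite set))"
  by (simp add: vec_eq_iff cl_blade_def if_distrib sum.delta cong: if_cong)

lemma cl_blade_mul: "cl_blade A \<star> cl_blade B = cl_sign A B *s cl_blade (sym_diff A B)"
proof (rule cl_eqI)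
  fix C
  have h: "\<And>D. cl_sign D (sym_diff D C) * cl_blade A $ D * cl_blade B $ sym_diff D C
     = (if D = A then cl_sign A (sym_diff A C) * cl_blade B $ sym_diff A C else 0)"
    by (simp add: cl_blade_nth)
  have "(cl_blade A \<star> cl_blade B) $ C = (\<Sum>D\<in>UNIV. if D = A then cl_sign A (sym_diff A C) * cl_blade B $ sym_diff A C else 0)"
    unfolding cl_mul_nth by (rule sum.cong[OF refl]) (rule h)
  also have "\<dots> = cl_sign A (sym_diff A C) * cl_blade B $ sym_diff A C" by simp
  also have "\<dots> = (cl_sign A B *s cl_blade (sym_diff A B)) $ C"
  proof (cases "C = sym_diff A B")
    case True
    then have "sym_diff A C = B" by auto
    then show ?thesis using True by (simp add: cl_blade_nth)
  next
    case False
    then have "sym_diff A C \<noteq> B" by auto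
    then show ?thesis using False by (simp add: cl_blade_nth)
  qed
  finally show "(cl_blade A \<star> cl_blade B) $ C = (cl_sign A B *s cl_blade (sym_diff A B)) $ C" .
qed

definition par :: "'a set \<Rightarrow> complex" where "par S = (-1) ^ card S"

lemma par_sd: assumes "finite X" "finite Y" shows "par (sym_diff X Y) = par X * par Y"
proof -
  have "card X + card Y = card (sym_diff X Y) + 2 * card (X \<inter> Y)"
  proof -
    have "card X = card (X \<inter> Y) + card (X - Y)" using assms(1) by (rule card_Int_Diff)
    moreover have "card Y = card (Y \<inter> X) + card (Y - X)" using assms(2) by (rule card_Int_Diff)
    moreover have "Y \<inter> X = X \<inter> Y" by blast
    moreover have "card (sym_diff X Y) = card (X - Y) + card (Y - X)" using assms
      by (subst card_Un_disjoint) auto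
    ultimately show ?thesis by simp
  qed
  then have "(-1::complex) ^ (card X + card Y) = (-1) ^ (card (sym_diff X Y) + 2 * card (X \<inter> Y))" by simp
  then show ?thesis by (simp add: par_def power_add power_mult)
qed

definition invs :: "'a::linorder set \<Rightarrow> 'a set \<Rightarrow> ('a \<times> 'a) set" where
  "invs A B = {(a,b). a \<in> A \<and> b \<in> B \<and> b < a}"

lemma cl_sign_par: "cl_sign A B = par (invs A B) * par (A \<inter> B)"
  by (simp add: cl_sign_def par_def invs_def power_add)

lemma invs_sd1: "invs (sym_diff A B) C = sym_diff (invs A C) (invs B C)"
  by (auto simp: invs_def)
lemma invs_sd2: "invs A (sym_diff B C) = sym_diff (invs A B) (invs A C)"
  by (auto simp: invs_def)

lemma cl_sign_cocycle:
  fixes A B C :: "'n::{finite,linorder} set"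
  shows "cl_sign A B * cl_sign (sym_diff A B) C = cl_sign A (sym_diff B C) * cl_sign B C"
proof -
  have f: "finite (S::('n\<times>'n) set)" for S by simp
  have g: "finite (S::'n set)" for S by simp
  have i1: "sym_diff A B \<inter> C = sym_diff (A \<inter> C) (B \<inter> C)" by auto
  have i2: "A \<inter> sym_diff B C = sym_diff (A \<inter> B) (A \<inter> C)" by auto
  show ?thesis
    unfolding cl_sign_par invs_sd1 invs_sd2 i1 i2
    by (simp add: par_sd[OF f f] par_sd[OF g g])
qed

lemma sd_assoc: "sym_diff (sym_diff A B) C = sym_diff A (sym_diff B C)" by auto


lemma cl_blade_assoc: "(cl_blade A \<star> cl_blade B) \<star> cl_blade C = cl_blade A \<star> (cl_blade B \<star> cl_blade (C::'n::{finite,linorder} set))"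
proof -
  have "(cl_blade A \<star> cl_blade B) \<star> cl_blade C = (cl_sign A B * cl_sign (sym_diff A B) C) *s cl_blade (sym_diff (sym_diff A B) C)"
    by (simp only: cl_blade_mul cl_mul_smult_left vector_smult_assoc)
  moreover have "cl_blade A \<star> (cl_blade B \<star> cl_blade C) = (cl_sign B C * cl_sign A (sym_diff B C)) *s cl_blade (sym_diff A (sym_diff B C))"
    by (simp only: cl_blade_mul cl_mul_smult_right vector_smult_assoc)
  ultimately show ?thesis by (simp only: cl_sign_cocycle sd_assoc mult.commute)
qed

lemma cl_mul_expand_left: "x \<star> z = (\<Sum>A\<in>UNIV. x $ A *s (cl_blade A \<star> z))"
proof -
  have "x \<star> z = (\<Sum>A\<in>UNIV. x $ A *s cl_blade A) \<star> z" by (simp only: cl_expand[symmetric])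
  also have "\<dots> = (\<Sum>A\<in>UNIV. x $ A *s (cl_blade A \<star> z))" by (simp only: cl_mul_sum_left cl_mul_smult_left)
  finally show ?thesis .
qed
lemma cl_mul_expand_right: "z \<star> x = (\<Sum>A\<in>UNIV. x $ A *s (z \<star> cl_blade A))"
proof -
  have "z \<star> x = z \<star> (\<Sum>A\<in>UNIV. x $ A *s cl_blade A)" by (simp only: cl_expand[symmetric])
  also have "\<dots> = (\<Sum>A\<in>UNIV. x $ A *s (z \<star> cl_blade A))" by (simp only: cl_mul_sum_right cl_mul_smult_right)
  finally show ?thesis .
qed

lemma cl_assoc1: "(cl_blade A \<star> cl_blade B) \<star> z = cl_blade A \<star> (cl_blade B \<star> (z::'n::{finite,linorder} cl))"
proof -
  have "(cl_blade A \<star> cl_blade B) \<star> z = (\<Sum>C\<in>UNIV. z $ C *s ((cl_blade A \<star> cl_blade B) \<star> cl_blade C))"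
    by (rule cl_mul_expand_right)
  also have "\<dots> = (\<Sum>C\<in>UNIV. z $ C *s (cl_blade A \<star> (cl_blade B \<star> cl_blade C)))"
    by (simp only: cl_blade_assoc)
  also have "\<dots> = cl_blade A \<star> (cl_blade B \<star> z)"
    by (simp only: cl_mul_expand_right[of "cl_blade B" z] cl_mul_sum_right cl_mul_smult_right)
  finally show ?thesis .
qed
lemma cl_assoc2: "(cl_blade A \<star> y) \<star> z = cl_blade A \<star> (y \<star> (z::'n::{finite,linorder} cl))"
proof -
  have "(cl_blade A \<star> y) \<star> z = (\<Sum>B\<in>UNIV. y $ B *s ((cl_blade A \<star> cl_blade B) \<star> z))"
    by (simp only: cl_mul_expand_right[of "cl_blade A" y] cl_mul_sum_left cl_mul_smult_left)
  also have "\<dots> = (\<Sum>B\<in>UNIV. y $ B *s (cl_blade A \<star> (cl_blade B \<star> z)))"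
    by (simp only: cl_assoc1)
  also have "\<dots> = cl_blade A \<star> (y \<star> z)"
    by (simp only: cl_mul_expand_left[of y z] cl_mul_sum_right cl_mul_smult_right)
  finally show ?thesis .
qed
lemma cl_assoc: "(x \<star> y) \<star> z = x \<star> (y \<star> (z::'n::{finite,linorder} cl))"
proof -
  have "(x \<star> y) \<star> z = (\<Sum>A\<in>UNIV. x $ A *s ((cl_blade A \<star> y) \<star> z))"
    by (simp only: cl_mul_expand_left[of x y] cl_mul_sum_left cl_mul_smult_left)
  also have "\<dots> = (\<Sum>A\<in>UNIV. x $ A *s (cl_blade A \<star> (y \<star> z)))"
    by (simp only: cl_assoc2)
  also have "\<dots> = x \<star> (y \<star> z)"
    by (simp only: cl_mul_expand_left[of x "y \<star> z"])
  finally show ?thesis .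
qed

lemma cl_sign_empty1[simp]: "cl_sign {} B = 1" by (simp add: cl_sign_def)
lemma cl_sign_empty2[simp]: "cl_sign A {} = 1" by (simp add: cl_sign_def)
lemma sd_empty1[simp]: "sym_diff {} B = B" by auto
lemma sd_empty2[simp]: "sym_diff A {} = A" by auto

lemma cl_one_nth: "cl_one $ A = (if A = {} then 1 else 0)"
  by (simp add: cl_one_def cl_blade_nth)

lemma cl_one_mul[simp]: "cl_one \<star> x = (x::'n::{finite,linorder} cl)"
proof -
  have "cl_one \<star> x = (\<Sum>A\<in>UNIV. x $ A *s (cl_one \<star> cl_blade A))" by (rule cl_mul_expand_right)
  also have "\<dots> = (\<Sum>A\<in>UNIV. x $ A *s cl_blade A)" by (simp only: cl_one_def cl_blade_mul cl_sign_empty1 sd_empty1 vector_smult_lid)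
  also have "\<dots> = x" by (rule cl_expand[symmetric])
  finally show ?thesis .
qed
lemma cl_mul_one[simp]: "x \<star> cl_one = (x::'n::{finite,linorder} cl)"
proof -
  have "x \<star> cl_one = (\<Sum>A\<in>UNIV. x $ A *s (cl_blade A \<star> cl_one))" by (rule cl_mul_expand_left)
  also have "\<dots> = (\<Sum>A\<in>UNIV. x $ A *s cl_blade A)" by (simp only: cl_one_def cl_blade_mul cl_sign_empty2 sd_empty2 vector_smult_lid)
  also have "\<dots> = x" by (rule cl_expand[symmetric])
  finally show ?thesis .
qed



lemma cl_blade_single_sq: "cl_blade {i} \<star> cl_blade {i} = - (cl_one :: 'n::{finite,linorder} cl)"
proof -
  have "invs {i} {i} = {}" by (auto simp: invs_def)
  then have "cl_sign {i} {i} = -1" by (simp add: cl_sign_par par_def)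
  then show ?thesis by (simp add: cl_blade_mul cl_one_def vec_eq_iff)
qed

lemma cl_blade_single_anti:
  assumes "i \<noteq> j"
  shows "cl_blade {i} \<star> cl_blade {j} = - (cl_blade {j} \<star> cl_blade {i} :: 'n::{finite,linorder} cl)"
proof -
  have sd: "sym_diff {i} {j} = {i,j}" "sym_diff {j} {i} = {i,j}" using assms by auto
  have "cl_sign {i} {j} = - cl_sign {j} {i}"
  proof (cases "j < i")
    case True
    then have "invs {i} {j} = {(i,j)}" "invs {j} {i} = {}" by (auto simp: invs_def)
    then show ?thesis using assms by (simp add: cl_sign_par par_def)
  next
    case False
    then have "i < j" using assms by auto
    then have "invs {i} {j} = {}" "invs {j} {i} = {(j,i)}" by (auto simp: invs_def)
    then show ?thesis using assms by (simp add: cl_sign_par par_def)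
  qed
  then show ?thesis by (simp add: cl_blade_mul sd vec_eq_iff)
qed

lemma cl_blade_single_anticomm:
  "cl_blade {i} \<star> cl_blade {j} + cl_blade {j} \<star> cl_blade {i}
     = (if i = j then -2 else 0) *s (cl_one :: 'n::{finite,linorder} cl)"
proof (cases "i = j")
  case True then show ?thesis by (simp add: cl_blade_single_sq vec_eq_iff)
next
  case False
  have "cl_blade {i} \<star> cl_blade {j} + cl_blade {j} \<star> cl_blade {i} = (0 :: 'n cl)"
    by (simp only: cl_blade_single_anti[OF False] add.left_inverse)
  then show ?thesis using False by (simp add: vec_eq_iff)
qed

definition isvec :: "'n::finite cl \<Rightarrow> bool" where
  "isvec x = (\<forall>A. card A \<noteq> 1 \<longrightarrow> x $ A = 0)"

lemma isvec_expand:
  assumes "isvec x"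
  shows "x = (\<Sum>i\<in>UNIV. x $ {i} *s cl_blade {i})"
proof (rule cl_eqI)
  fix A :: "'a set"
  have "(\<Sum>i\<in>UNIV. x $ {i} *s cl_blade {i}) $ A = (\<Sum>i\<in>UNIV. if A = {i} then x $ {i} else 0)"
    by (simp add: cl_blade_nth if_distrib cong: if_cong)
  also have "\<dots> = x $ A"
  proof (cases "card A = 1")
    case True
    then obtain a where a: "A = {a}" using card_1_singletonE by blast
    then have "(\<Sum>i\<in>UNIV. if A = {i} then x $ {i} else 0) = (\<Sum>i\<in>UNIV. if i = a then x $ {a} else 0)"
      by (intro sum.cong) auto
    then show ?thesis using a by simp
  next
    case False
    then have "\<And>i. A \<noteq> {i}" by auto
    then show ?thesis using False assms by (simp add: isvec_def)
  qed
  finally show "x $ A = (\<Sum>i\<in>UNIV. x $ {i} *s cl_blade {i}) $ A" ..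
qed

lemma isvec_blade: "isvec (cl_blade {i})"
  by (simp add: isvec_def cl_blade_nth)
lemma isvec_add: "isvec x \<Longrightarrow> isvec y \<Longrightarrow> isvec (x + y)"
  by (simp add: isvec_def)
lemma isvec_diff: "isvec x \<Longrightarrow> isvec y \<Longrightarrow> isvec (x - y)"
  by (simp add: isvec_def)
lemma isvec_smult: "isvec x \<Longrightarrow> isvec (c *s x)"
  by (simp add: isvec_def)
lemma isvec_sum: "(\<And>i. i \<in> I \<Longrightarrow> isvec (f i)) \<Longrightarrow> isvec (\<Sum>i\<in>I. f i)"
  by (induction I rule: infinite_finite_induct) (auto simp: isvec_def)

definition ip :: "'n::finite cl \<Rightarrow> 'n cl \<Rightarrow> complex" where
  "ip x y = (\<Sum>i\<in>UNIV. x $ {i} * y $ {i})"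

lemma smult_sum: "(c::complex) *s (\<Sum>i\<in>I. f i) = (\<Sum>i\<in>I. c *s (f i :: 'n::finite cl))"
  by (induction I rule: infinite_finite_induct) (simp_all add: vec_eq_iff algebra_simps)

lemma isvec_bilin:
  assumes "isvec x" "isvec y"
  shows "x \<star> y = (\<Sum>i\<in>UNIV. \<Sum>j\<in>UNIV. (x $ {i} * y $ {j}) *s (cl_blade {i} \<star> cl_blade {j} :: 'n::{finite,linorder} cl))"
proof -
  have "x \<star> y = x \<star> (\<Sum>j\<in>UNIV. y $ {j} *s cl_blade {j})" using isvec_expand[OF assms(2)] by simp
  also have "\<dots> = (\<Sum>j\<in>UNIV. y $ {j} *s (x \<star> cl_blade {j}))" by (simp only: cl_mul_sum_right cl_mul_smult_right)
  also have "\<dots> = (\<Sum>j\<in>UNIV. y $ {j} *s ((\<Sum>i\<in>UNIV. x $ {i} *s cl_blade {i}) \<star> cl_blade {j}))"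
    using isvec_expand[OF assms(1)] by simp
  also have "\<dots> = (\<Sum>j\<in>UNIV. \<Sum>i\<in>UNIV. (x $ {i} * y $ {j}) *s (cl_blade {i} \<star> cl_blade {j}))"
    by (simp only: cl_mul_sum_left cl_mul_smult_left smult_sum vector_smult_assoc mult.commute)
  also have "\<dots> = (\<Sum>i\<in>UNIV. \<Sum>j\<in>UNIV. (x $ {i} * y $ {j}) *s (cl_blade {i} \<star> cl_blade {j}))"
    by (rule sum.swap)
  finally show ?thesis .
qed

lemma isvec_anticomm:
  assumes "isvec x" "isvec y"
  shows "x \<star> y + y \<star> x = (-2 * ip x y) *s (cl_one :: 'n::{finite,linorder} cl)"
proof -
  have 1: "x \<star> y = (\<Sum>i\<in>UNIV. \<Sum>j\<in>UNIV. (x $ {i} * y $ {j}) *s (cl_blade {i} \<star> cl_blade {j}))"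
    by (rule isvec_bilin[OF assms])
  have "y \<star> x = (\<Sum>i\<in>UNIV. \<Sum>j\<in>UNIV. (y $ {i} * x $ {j}) *s (cl_blade {i} \<star> cl_blade {j}))"
    by (rule isvec_bilin[OF assms(2,1)])
  also have "\<dots> = (\<Sum>j\<in>UNIV. \<Sum>i\<in>UNIV. (y $ {i} * x $ {j}) *s (cl_blade {i} \<star> cl_blade {j}))"
    by (rule sum.swap)
  also have "\<dots> = (\<Sum>i\<in>UNIV. \<Sum>j\<in>UNIV. (x $ {i} * y $ {j}) *s (cl_blade {j} \<star> cl_blade {i}))"
    by (simp only: mult.commute)
  finally have 2: "y \<star> x = \<dots>" .
  have "x \<star> y + y \<star> x = (\<Sum>i\<in>UNIV. \<Sum>j\<in>UNIV. (x $ {i} * y $ {j}) *s (cl_blade {i} \<star> cl_blade {j} + cl_blade {j} \<star> cl_blade {i}))"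
    unfolding 1 2 by (simp only: sum.distrib[symmetric] vector_add_ldistrib)
  also have "\<dots> = (\<Sum>i\<in>UNIV. \<Sum>j\<in>UNIV. (if j = i then (-2 * (x $ {i} * y $ {i})) *s cl_one else 0))"
    by (intro sum.cong refl) (auto simp: cl_blade_single_anticomm vector_smult_assoc)
  also have "\<dots> = (\<Sum>i\<in>UNIV. (-2 * (x $ {i} * y $ {i})) *s cl_one)"
    by (rule sum.cong[OF refl]) simp
  also have "\<dots> = (-2 * ip x y) *s cl_one"
    by (simp add: ip_def sum_distrib_left vec_eq_iff sum_distrib_right)
  finally show ?thesis .
qed
lemma twice_aux: "(a::complex) + a = (-2 * c) * d \<Longrightarrow> a = (- c) * d"
  by algebra

lemma isvec_sq:
  assumes "isvec x"
  shows "x \<star> x = (- ip x x) *s (cl_one :: 'n::{finite,linorder} cl)"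
proof -
  have e: "x \<star> x + x \<star> x = (-2 * ip x x) *s cl_one" by (rule isvec_anticomm[OF assms assms])
  show ?thesis
  proof (rule cl_eqI)
    fix i
    have h: "(x \<star> x) $ i + (x \<star> x) $ i = (-2 * ip x x) * cl_one $ i"
      using arg_cong[OF e, of "\<lambda>v. v $ i"] by (simp only: vector_add_component vector_smult_component)
    have "(x \<star> x) $ i = (- ip x x) * cl_one $ i" using h by (rule twice_aux)
    then show "(x \<star> x) $ i = ((- ip x x) *s cl_one) $ i" by (simp only: vector_smult_component)
  qed
qed

lemma isvec_reflect:
  assumes "isvec u" "isvec v"
  shows "isvec (u \<star> v \<star> (u::'n::{finite,linorder} cl))"
proof -
  have "v \<star> u = (-2 * ip u v) *s cl_one - u \<star> v"
    using isvec_anticomm[OF assms] by (simp add: algebra_simps)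
  then have "u \<star> v \<star> u = u \<star> ((-2 * ip u v) *s cl_one - u \<star> v)" by (simp add: cl_assoc)
  also have "\<dots> = (-2 * ip u v) *s u - (u \<star> u) \<star> v"
    by (simp add: cl_mul_diff_right cl_mul_smult_right cl_assoc cl_mul_minus_right)
  also have "\<dots> = (-2 * ip u v) *s u - (- ip u u) *s v"
    by (simp add: isvec_sq[OF assms(1)] cl_mul_smult_left cl_mul_minus_left)
  finally show ?thesis using assms by (simp add: isvec_diff isvec_smult)
qed

definition isreal :: "'n::finite cl \<Rightarrow> bool" where
  "isreal x = (\<forall>A. Im (x $ A) = 0)"

lemma cl_sign_real: "Im (cl_sign A B) = 0"
  by (simp add: cl_sign_def)

lemma isreal_mul: "isreal x \<Longrightarrow> isreal y \<Longrightarrow> isreal (x \<star> y)"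
  by (simp add: isreal_def cl_mul_nth Im_sum cl_sign_real)

lemma isreal_one: "isreal cl_one" by (simp add: isreal_def cl_one_nth)

lemma isreal_prod: "(\<And>x. x \<in> set xs \<Longrightarrow> isreal x) \<Longrightarrow> isreal (cl_prod xs)"
  by (induction xs) (auto simp: cl_prod_def isreal_one isreal_mul)

lemma cl_vec_expand: "cl_vec X = (\<Sum>i\<in>UNIV. complex_of_real (X $ i) *s cl_blade {i})"
  by (simp add: cl_vec_def)

lemma cl_vec_nth: "cl_vec X $ A = (if card A = 1 then complex_of_real (X $ (THE i. A = {i})) else 0)"
proof -
  have "cl_vec X $ A = (\<Sum>i\<in>UNIV. if A = {i} then complex_of_real (X $ i) else 0)"
    by (simp add: cl_vec_def cl_blade_nth if_distrib cong: if_cong)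
  also have "\<dots> = (if card A = 1 then complex_of_real (X $ (THE i. A = {i})) else 0)"
  proof (cases "card A = 1")
    case True
    then obtain a where a: "A = {a}" using card_1_singletonE by blast
    then have "(\<Sum>i\<in>UNIV. if A = {i} then complex_of_real (X $ i) else 0) = (\<Sum>i\<in>UNIV. if i = a then complex_of_real (X $ a) else 0)"
      by (intro sum.cong) auto
    then show ?thesis using a by simp
  next
    case False
    then have "\<And>i. A \<noteq> {i}" by auto
    then show ?thesis using False by simp
  qed
  finally show ?thesis .
qed

lemma cl_vec_single: "cl_vec X $ {i} = complex_of_real (X $ i)"
  by (simp add: cl_vec_nth)

lemma isvec_cl_vec: "isvec (cl_vec X)" by (simp add: isvec_def cl_vec_nth)
lemma isreal_cl_vec: "isreal (cl_vec X)" by (simp add: isreal_def cl_vec_nth)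

lemma cl_unvec_cl_vec: "cl_unvec (cl_vec X) = X"
  by (simp add: cl_unvec_def cl_vec_single vec_eq_iff)

lemma cl_vec_sq: "cl_vec X \<star> cl_vec X = (- complex_of_real ((norm X)^2)) *s (cl_one :: 'n::{finite,linorder} cl)"
proof -
  have "ip (cl_vec X) (cl_vec X) = complex_of_real ((norm X)^2)"
    by (simp add: ip_def cl_vec_single power2_norm_eq_inner inner_vec_def)
  note h = this
  show ?thesis by (subst isvec_sq[OF isvec_cl_vec]) (simp only: h)
qed



lemma cl_prod_Nil[simp]: "cl_prod [] = cl_one" by (simp add: cl_prod_def)
lemma cl_prod_Cons[simp]: "cl_prod (x # xs) = x \<star> cl_prod xs" by (simp add: cl_prod_def)
lemma cl_prod_append: "cl_prod (xs @ ys) = cl_prod xs \<star> (cl_prod ys :: 'n::{finite,linorder} cl)"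
  by (induction xs) (simp_all add: cl_assoc)
lemma cl_prod_single: "cl_prod [x] = (x :: 'n::{finite,linorder} cl)" by simp

lemma cl_prod_rev_inv:
  assumes "\<And>u. u \<in> set us \<Longrightarrow> u \<star> u = - (cl_one :: 'n::{finite,linorder} cl)"
  shows "cl_prod us \<star> cl_prod (rev us) = (-1) ^ length us *s cl_one
       \<and> cl_prod (rev us) \<star> cl_prod us = (-1) ^ length us *s cl_one"
  using assms
proof (induction us)
  case Nil then show ?case by (simp add: vec_eq_iff)
next
  case (Cons u us)
  let ?c = "((-1::complex) ^ length us)"
  have uu: "u \<star> u = - cl_one" using Cons.prems by simp
  have IH: "cl_prod us \<star> cl_prod (rev us) = ?c *s cl_one" "cl_prod (rev us) \<star> cl_prod us = ?c *s cl_one"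
    using Cons by auto
  have "cl_prod (u # us) \<star> cl_prod (rev (u # us)) = u \<star> (cl_prod us \<star> cl_prod (rev us)) \<star> u"
    by (simp add: cl_prod_append cl_assoc)
  also have "\<dots> = ?c *s (u \<star> u)" by (simp add: IH cl_mul_smult_left cl_mul_smult_right)
  also have "\<dots> = (-1) ^ length (u # us) *s cl_one" by (simp add: uu vec_eq_iff)
  finally have 1: "cl_prod (u # us) \<star> cl_prod (rev (u # us)) = (-1) ^ length (u # us) *s cl_one" .
  have "cl_prod (rev (u # us)) \<star> cl_prod (u # us) = cl_prod (rev us) \<star> (u \<star> u) \<star> cl_prod us"
    by (simp add: cl_prod_append cl_assoc)
  also have "\<dots> = - (cl_prod (rev us) \<star> cl_prod us)" by (simp add: uu cl_mul_minus_left cl_mul_minus_right)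
  also have "\<dots> = (-1) ^ length (u # us) *s cl_one" by (simp add: IH vec_eq_iff)
  finally show ?case using 1 by simp
qed

lemma cl_prod_conj_vec:
  assumes "\<And>u. u \<in> set us \<Longrightarrow> isvec u" "isvec v"
  shows "isvec (cl_prod us \<star> v \<star> cl_prod (rev us) :: 'n::{finite,linorder} cl)"
  using assms(1)
proof (induction us)
  case Nil then show ?case using assms(2) by simp
next
  case (Cons u us)
  have "cl_prod (u # us) \<star> v \<star> cl_prod (rev (u # us)) = u \<star> (cl_prod us \<star> v \<star> cl_prod (rev us)) \<star> u"
    by (simp add: cl_prod_append cl_assoc)
  then show ?case using Cons isvec_reflect by auto
qed

lemma cl_inv_unique:
  assumes "s \<star> t = cl_one" "t \<star> s = (cl_one :: 'n::{finite,linorder} cl)"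
  shows "cl_inv s = t"
  unfolding cl_inv_def
proof (rule the_equality)
  show "s \<star> t = cl_one \<and> t \<star> s = cl_one" using assms by simp
  fix t' assume "s \<star> t' = cl_one \<and> t' \<star> s = cl_one"
  then have "t' = t' \<star> (s \<star> t)" "t' \<star> s = cl_one" using assms by auto
  then show "t' = t" by (simp add: cl_assoc[symmetric])
qed

lemma spin_props:
  assumes "s \<in> (spin_group :: 'n::{finite,linorder} cl set)"
  obtains t where "s \<star> t = cl_one" "t \<star> s = cl_one" "cl_inv s = t"
    "\<And>v. isvec v \<Longrightarrow> isvec (s \<star> v \<star> t)" "\<And>v. isvec v \<Longrightarrow> isvec (t \<star> v \<star> s)"
    "isreal s" "isreal t"
proof -
  obtain ws where s: "s = cl_prod (map cl_vec ws)" and ev: "even (length ws)"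
    and un: "\<forall>w\<in>set ws. norm w = 1"
    using assms unfolding spin_group_def by blast
  define us where "us = map cl_vec ws"
  define t where "t = cl_prod (rev us)"
  have sq: "\<And>u. u \<in> set us \<Longrightarrow> u \<star> u = - cl_one"
    using un unfolding us_def by (auto simp: cl_vec_sq vec_eq_iff)
  have ev2: "even (length us)" using ev by (simp add: us_def)
  have st: "s \<star> t = cl_one" "t \<star> s = cl_one"
    using cl_prod_rev_inv[OF sq] ev2 unfolding s t_def us_def[symmetric] by (auto simp: vec_eq_iff)
  have vec: "\<And>u. u \<in> set us \<Longrightarrow> isvec u" "\<And>u. u \<in> set (rev us) \<Longrightarrow> isvec u"
    by (auto simp: us_def isvec_cl_vec)
  have re: "\<And>u. u \<in> set us \<Longrightarrow> isreal u" "\<And>u. u \<in> set (rev us) \<Longrightarrow> isreal u"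
    by (auto simp: us_def isreal_cl_vec)
  show ?thesis
  proof (rule that[of t])
    show "s \<star> t = cl_one" "t \<star> s = cl_one" by (rule st)+
    show "cl_inv s = t" by (rule cl_inv_unique[OF st])
    show "\<And>v. isvec v \<Longrightarrow> isvec (s \<star> v \<star> t)"
      unfolding s t_def us_def[symmetric] by (rule cl_prod_conj_vec[OF vec(1)])
    show "\<And>v. isvec v \<Longrightarrow> isvec (t \<star> v \<star> s)"
    proof -
      fix v :: "'n cl" assume "isvec v"
      from cl_prod_conj_vec[of "rev us" v, OF vec(2) this]
      show "isvec (t \<star> v \<star> s)" unfolding s t_def us_def[symmetric] by simp
    qed
    show "isreal s" unfolding s us_def[symmetric] by (rule isreal_prod[OF re(1)])
    show "isreal t" unfolding t_def by (rule isreal_prod[OF re(2)])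
  qed
qed

lemma scal_mul: "(x \<star> y) $ {} = (\<Sum>A\<in>UNIV. cl_sign A A * x $ A * y $ A)"
  by (simp add: cl_mul_nth)

lemma scal_comm: "(x \<star> y) $ {} = (y \<star> x) $ {}"
  by (simp add: scal_mul mult.commute mult.left_commute)

lemma cl_sign_single: "cl_sign {i} {i} = -1"
proof -
  have "invs {i} {i} = {}" by (auto simp: invs_def)
  then show ?thesis by (simp add: cl_sign_par par_def)
qed

lemma comp_scal: "x $ {i} = - (x \<star> cl_blade {i}) $ {}"
proof -
  have "(x \<star> cl_blade {i}) $ {} = (\<Sum>A\<in>UNIV. if A = {i} then cl_sign {i} {i} * x $ {i} else 0)"
    unfolding scal_mul by (rule sum.cong) (auto simp: cl_blade_nth)
  then show ?thesis by (simp add: cl_sign_single)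
qed

lemma conj_transpose:
  "(t \<star> cl_blade {j} \<star> s) $ {i} = (s \<star> cl_blade {i} \<star> t) $ {j :: 'n::{finite,linorder}}"
proof -
  have "(t \<star> cl_blade {j} \<star> s) $ {i} = - (t \<star> (cl_blade {j} \<star> s \<star> cl_blade {i})) $ {}"
    by (simp add: comp_scal[of _ i] cl_assoc)
  also have "\<dots> = - ((cl_blade {j} \<star> s \<star> cl_blade {i}) \<star> t) $ {}"
    by (simp add: scal_comm[of t])
  also have "\<dots> = - (cl_blade {j} \<star> (s \<star> cl_blade {i} \<star> t)) $ {}"
    by (simp add: cl_assoc)
  also have "\<dots> = - ((s \<star> cl_blade {i} \<star> t) \<star> cl_blade {j}) $ {}"
    by (simp add: scal_comm[of "cl_blade {j}"])
  also have "\<dots> = (s \<star> cl_blade {i} \<star> t) $ {j}"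
    by (simp add: comp_scal[of _ j])
  finally show ?thesis .
qed



lemma ix_props:
  assumes "CARD('n::{finite,linorder}) = 4 * p"
  shows "inj_on (ix :: nat \<Rightarrow> 'n) {1..4*p}" "(ix :: nat \<Rightarrow> 'n) ` {1..4*p} = UNIV"
proof -
  let ?L = "sorted_list_of_set (UNIV :: 'n set)"
  have len: "length ?L = 4 * p" using assms by (simp add: length_sorted_list_of_set)
  have dist: "distinct ?L" by (simp add: distinct_sorted_list_of_set)
  have set: "set ?L = UNIV" by (simp add: set_sorted_list_of_set)
  show "inj_on (ix :: nat \<Rightarrow> 'n) {1..4*p}"
  proof (rule inj_onI)
    fix a b assume a: "a \<in> {1..4*p}" and b: "b \<in> {1..4*p}" and e: "(ix a :: 'n) = ix b"
    then have "?L ! (a - 1) = ?L ! (b - 1)" by (simp add: ix_def)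
    moreover have "a - 1 < length ?L" "b - 1 < length ?L" using len a b by auto
    ultimately have "a - 1 = b - 1" using nth_eq_iff_index_eq[OF dist] by blast
    then show "a = b" using a b by auto
  qed
  show "(ix :: nat \<Rightarrow> 'n) ` {1..4*p} = UNIV"
  proof (rule set_eqI, rule iffI)
    fix i :: 'n assume "i \<in> UNIV"
    then have "i \<in> set ?L" using set by simp
    then obtain k where k: "k < length ?L" "?L ! k = i" using in_set_conv_nth[of i ?L] by blast
    then have "ix (k + 1) = i" by (simp add: ix_def)
    moreover have "k + 1 \<in> {1..4*p}" using k len by auto
    ultimately show "i \<in> ix ` {1..4*p}" by blast
  qed simp
qed

lemma sum_ix:
  assumes "CARD('n::{finite,linorder}) = 4 * p"
  shows "(\<Sum>i\<in>UNIV. f (i::'n)) = (\<Sum>a=1..4*p. f (ix a))"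
proof -
  have "(\<Sum>i\<in>ix ` {1..4*p}. f i) = (\<Sum>a=1..4*p. f (ix a))"
    using sum.reindex[OF ix_props(1)[OF assms], of f] by (simp add: o_def)
  then show ?thesis unfolding ix_props(2)[OF assms] .
qed

lemma gen_sq: "cl_gen a \<star> cl_gen a = - (cl_one :: 'n::{finite,linorder} cl)"
  by (simp add: cl_gen_def cl_blade_single_sq)

lemma gen_anti:
  assumes "CARD('n::{finite,linorder}) = 4 * p" "a \<in> {1..4*p}" "b \<in> {1..4*p}" "a \<noteq> b"
  shows "cl_gen a \<star> cl_gen b = - (cl_gen b \<star> cl_gen a :: 'n cl)"
proof -
  have "(ix a :: 'n) \<noteq> ix b" using ix_props(1)[OF assms(1)] assms(2-4) by (auto dest: inj_onD)
  then show ?thesis unfolding cl_gen_def by (rule cl_blade_single_anti)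
qed

definition intw :: "'n::{finite,linorder} cl \<Rightarrow> 'n cl \<Rightarrow> 'n cl \<Rightarrow> bool" where
  "intw X a b \<longleftrightarrow> X \<star> a = b \<star> X"

lemma intw_mul: "intw X a b \<Longrightarrow> intw Y b c \<Longrightarrow> intw (Y \<star> X) a c"
  by (simp add: intw_def cl_assoc) (simp add: cl_assoc[symmetric])
lemma intw_smult: "intw X a b \<Longrightarrow> intw (c *s X) a b"
  by (simp add: intw_def cl_mul_smult_left cl_mul_smult_right)
lemma intw_neg: "intw X a b \<Longrightarrow> intw X (-a) (-b)"
  by (simp add: intw_def cl_mul_minus_left cl_mul_minus_right)
lemma intw_one: "intw cl_one a a"
  by (simp add: intw_def)
lemma intw_prod_comm: "(\<And>f. f \<in> set xs \<Longrightarrow> intw f a a) \<Longrightarrow> intw (cl_prod xs) a a"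
  by (induction xs) (auto simp: intw_one intw_mul)
lemma intw_prod_split:
  assumes "\<And>f. f \<in> set xs \<Longrightarrow> intw f b b" "intw g a b" "\<And>f. f \<in> set ys \<Longrightarrow> intw f a a"
  shows "intw (cl_prod (xs @ g # ys)) a b"
proof -
  have "intw (g \<star> cl_prod ys) a b" using intw_mul[OF intw_prod_comm[OF assms(3)] assms(2)] .
  then have "intw (cl_prod xs \<star> (g \<star> cl_prod ys)) a b" using intw_mul intw_prod_comm[OF assms(1)] by blast
  then show ?thesis by (simp add: cl_prod_append)
qed

definition rot :: "nat \<Rightarrow> nat \<Rightarrow> 'n::{finite,linorder} cl" where
  "rot a b = cl_one + cl_gen a \<star> cl_gen b"
definition rot' :: "nat \<Rightarrow> nat \<Rightarrow> 'n::{finite,linorder} cl" where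
  "rot' a b = cl_one - cl_gen a \<star> cl_gen b"

context
  fixes p :: nat
  assumes card: "CARD('n::{finite,linorder}) = 4 * p"
begin

lemma aba:
  assumes "a \<in> {1..4*p}" "b \<in> {1..4*p}" "a \<noteq> b"
  shows "cl_gen a \<star> cl_gen b \<star> cl_gen a = (cl_gen b :: 'n cl)"
proof -
  have "cl_gen a \<star> cl_gen b \<star> cl_gen a = cl_gen a \<star> (- (cl_gen a \<star> cl_gen b) :: 'n cl)"
    using gen_anti[OF card assms(2,1)] assms by (simp add: cl_assoc)
  also have "\<dots> = cl_gen b" by (simp add: cl_mul_minus_right cl_assoc[symmetric] gen_sq cl_mul_minus_left)
  finally show ?thesis .
qed

lemma abb:
  assumes "a \<in> {1..4*p}" "b \<in> {1..4*p}" "a \<noteq> b"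
  shows "cl_gen a \<star> cl_gen b \<star> cl_gen b = - (cl_gen a :: 'n cl)"
  by (simp add: cl_assoc gen_sq cl_mul_minus_right)

lemma bab:
  assumes "a \<in> {1..4*p}" "b \<in> {1..4*p}" "a \<noteq> b"
  shows "cl_gen b \<star> cl_gen a \<star> cl_gen b = (cl_gen a :: 'n cl)"
  using aba[OF assms(2,1)] assms by auto

lemma rot_a: assumes "a \<in> {1..4*p}" "b \<in> {1..4*p}" "a \<noteq> b"
  shows "intw (rot a b :: 'n cl) (cl_gen a) (cl_gen b)"
proof -
  have "(rot a b :: 'n cl) \<star> cl_gen a = cl_gen a + cl_gen b"
    by (simp add: rot_def cl_mul_add_left aba[OF assms])
  moreover have "cl_gen b \<star> (rot a b :: 'n cl) = cl_gen b + cl_gen a"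
    by (simp add: rot_def cl_mul_add_right cl_assoc[symmetric] gen_anti[OF card assms(2,1)] assms(3)[symmetric]
        cl_mul_minus_left abb[OF assms])
  ultimately show ?thesis by (simp add: intw_def add.commute)
qed

lemma rot_b: assumes "a \<in> {1..4*p}" "b \<in> {1..4*p}" "a \<noteq> b"
  shows "intw (rot a b :: 'n cl) (cl_gen b) (- cl_gen a)"
proof -
  have "(rot a b :: 'n cl) \<star> cl_gen b = cl_gen b - cl_gen a"
    by (simp add: rot_def cl_mul_add_left abb[OF assms])
  moreover have "(- cl_gen a) \<star> (rot a b :: 'n cl) = cl_gen b - cl_gen a"
    by (simp add: rot_def cl_mul_add_right cl_mul_minus_left cl_assoc[symmetric] gen_sq)
  ultimately show ?thesis by (simp add: intw_def)
qed

lemma rot_c: assumes "a \<in> {1..4*p}" "b \<in> {1..4*p}" "c \<in> {1..4*p}" "c \<noteq> a" "c \<noteq> b"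
  shows "intw (rot a b :: 'n cl) (cl_gen c) (cl_gen c)"
proof -
  have "cl_gen a \<star> cl_gen b \<star> cl_gen c = (cl_gen c \<star> (cl_gen a \<star> cl_gen b) :: 'n cl)"
  proof -
    have "cl_gen a \<star> cl_gen b \<star> cl_gen c = cl_gen a \<star> (- (cl_gen c \<star> cl_gen b) :: 'n cl)"
      using gen_anti[OF card assms(2,3)] assms by (simp add: cl_assoc)
    also have "\<dots> = cl_gen c \<star> cl_gen a \<star> cl_gen b"
      using gen_anti[OF card assms(1,3)] assms by (simp add: cl_assoc[symmetric] cl_mul_minus_right cl_mul_minus_left)
    finally show ?thesis by (simp add: cl_assoc)
  qed
  then show ?thesis by (simp add: intw_def rot_def cl_mul_add_left cl_mul_add_right)
qed

lemma rot_inv: assumes "a \<in> {1..4*p}" "b \<in> {1..4*p}" "a \<noteq> b"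
  shows "(rot a b :: 'n cl) \<star> rot' a b = 2 *s cl_one" "(rot' a b :: 'n cl) \<star> rot a b = 2 *s cl_one"
proof -
  have E: "(cl_gen a \<star> cl_gen b) \<star> (cl_gen a \<star> cl_gen b) = - (cl_one :: 'n cl)"
    by (simp add: cl_assoc[symmetric] aba[OF assms] gen_sq)
  show "(rot a b :: 'n cl) \<star> rot' a b = 2 *s cl_one"
    by (simp add: rot_def rot'_def cl_mul_add_left cl_mul_diff_right E vec_eq_iff)
  show "(rot' a b :: 'n cl) \<star> rot a b = 2 *s cl_one"
    by (simp add: rot_def rot'_def cl_mul_diff_left cl_mul_add_right E vec_eq_iff)
qed

end



lemma upt_split: "i \<le> k \<Longrightarrow> k < j \<Longrightarrow> [i..<j] = [i..<k] @ k # [Suc k..<j]"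
proof -
  assume a: "i \<le> k" "k < j"
  have "[i..<j] = [i..<k] @ [k..<j]" using upt_add_eq_append[of i k "j-k"] a by simp
  also have "[k..<j] = k # [Suc k..<j]" using a(2) by (rule upt_conv_Cons)
  finally show ?thesis .
qed

lemma prod_intw_at:
  assumes "i \<le> k" "k < j"
    "\<And>m. i \<le> m \<Longrightarrow> m < j \<Longrightarrow> m \<noteq> k \<Longrightarrow> intw (F m) a a \<and> intw (F m) b b"
    "intw (F k) a b"
  shows "intw (cl_prod (map F [i..<j])) a b"
proof -
  have "map F [i..<j] = map F [i..<k] @ F k # map F [Suc k..<j]" using upt_split[OF assms(1,2)] by simp
  moreover have "intw (cl_prod (map F [i..<k] @ F k # map F [Suc k..<j])) a b"
    by (rule intw_prod_split) (use assms in auto)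
  ultimately show ?thesis by simp
qed

lemma prod_inv_list:
  assumes "\<And>x. x \<in> set xs \<Longrightarrow> f x \<star> g x = cl_one \<and> g x \<star> f x = (cl_one :: 'n::{finite,linorder} cl)"
  shows "cl_prod (map f xs) \<star> cl_prod (map g (rev xs)) = cl_one \<and> cl_prod (map g (rev xs)) \<star> cl_prod (map f xs) = cl_one"
  using assms
proof (induction xs)
  case Nil then show ?case by simp
next
  case (Cons x xs)
  have fx: "f x \<star> g x = cl_one" "g x \<star> f x = cl_one" using Cons.prems by auto
  have IH: "cl_prod (map f xs) \<star> cl_prod (map g (rev xs)) = cl_one" "cl_prod (map g (rev xs)) \<star> cl_prod (map f xs) = cl_one"
    using Cons by auto
  have "cl_prod (map f (x # xs)) \<star> cl_prod (map g (rev (x # xs))) = f x \<star> (cl_prod (map f xs) \<star> cl_prod (map g (rev xs))) \<star> g x"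
    by (simp add: cl_prod_append cl_assoc)
  moreover have "cl_prod (map g (rev (x # xs))) \<star> cl_prod (map f (x # xs)) = cl_prod (map g (rev xs)) \<star> (g x \<star> f x) \<star> cl_prod (map f xs)"
    by (simp add: cl_prod_append cl_assoc)
  ultimately show ?case using fx IH by simp
qed

lemma conj_by_intw: "intw X a b \<Longrightarrow> X \<star> X' = cl_one \<Longrightarrow> X \<star> a \<star> X' = b"
  by (simp add: intw_def cl_assoc)

lemma sqrt2_half: "complex_of_real (sqrt 2 / 2) * complex_of_real (sqrt 2 / 2) * 2 = 1"
proof -
  have r: "sqrt 2 / 2 * (sqrt 2 / 2) * 2 = (1::real)" by simp
  have "complex_of_real (sqrt 2 / 2) * complex_of_real (sqrt 2 / 2) * 2 = complex_of_real (sqrt 2 / 2 * (sqrt 2 / 2) * 2)"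
    by (simp only: of_real_mult of_real_numeral)
  then show ?thesis by (simp only: r of_real_1)
qed

definition uI :: "nat \<Rightarrow> 'n::{finite,linorder} cl" where
  "uI j = complex_of_real (sqrt 2 / 2) *s rot (2*j-1) (2*j)"
definition uI' :: "nat \<Rightarrow> 'n::{finite,linorder} cl" where
  "uI' j = complex_of_real (sqrt 2 / 2) *s rot' (2*j-1) (2*j)"
definition sI' :: "nat \<Rightarrow> 'n::{finite,linorder} cl" where
  "sI' p = cl_prod (map uI' (rev [1..<2*p+1]))"

definition vJ :: "nat \<Rightarrow> 'n::{finite,linorder} cl" where
  "vJ j = (1/2::complex) *s (rot (4*j-3) (4*j-1) \<star> rot (4*j) (4*j-2))"
definition vJ' :: "nat \<Rightarrow> 'n::{finite,linorder} cl" where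
  "vJ' j = (1/2::complex) *s (rot' (4*j) (4*j-2) \<star> rot' (4*j-3) (4*j-1))"
definition sJ' :: "nat \<Rightarrow> 'n::{finite,linorder} cl" where
  "sJ' p = cl_prod (map vJ' (rev [1..<p+1]))"

lemma s_I_eq: "s_I p = cl_prod (map uI [1..<2*p+1])"
  unfolding s_I_def uI_def[abs_def] rot_def by (rule refl)

context
  fixes p :: nat
  assumes card: "CARD('n::{finite,linorder}) = 4 * p"
begin

lemma s_J_eq: "(s_J p :: 'n cl) = cl_prod (map vJ [1..<p+1])"
proof -
  have h: "\<And>j. j \<in> set [1..<p+1] \<Longrightarrow>
     ((1/2::complex) *s (cl_one + cl_gen (4*j-3) \<star> cl_gen (4*j-1))) \<star> (cl_one - cl_gen (4*j-2) \<star> cl_gen (4*j))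
     = (vJ j :: 'n cl)"
  proof -
    fix j assume "j \<in> set [1..<p+1]"
    then have "4*j-2 \<in> {1..4*p}" "4*j \<in> {1..4*p}" "4*j-2 \<noteq> 4*j" by auto
    then have "cl_gen (4*j-2) \<star> cl_gen (4*j) = - (cl_gen (4*j) \<star> cl_gen (4*j-2) :: 'n cl)"
      by (rule gen_anti[OF card])
    then show "?thesis j"
      by (simp only: vJ_def rot_def cl_mul_smult_left diff_minus_eq_add)
  qed
  show ?thesis unfolding s_J_def by (rule arg_cong[where f=cl_prod], rule map_cong[OF refl], rule h)
qed

lemma uI_inv: assumes "j \<in> {1..2*p}"
  shows "(uI j :: 'n cl) \<star> uI' j = cl_one \<and> (uI' j :: 'n cl) \<star> uI j = cl_one"
proof -
  have idx: "2*j-1 \<in> {1..4*p}" "2*j \<in> {1..4*p}" "2*j-1 \<noteq> 2*j" using assms by auto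
  let ?c = "complex_of_real (sqrt 2 / 2)"
  have c: "?c * (?c * 2) = 1" using sqrt2_half by (simp only: mult.assoc)
  have "(uI j :: 'n cl) \<star> uI' j = (?c * (?c * 2)) *s cl_one"
    by (simp only: uI_def uI'_def cl_mul_smult_left cl_mul_smult_right rot_inv[OF card idx] vector_smult_assoc)
  moreover have "(uI' j :: 'n cl) \<star> uI j = (?c * (?c * 2)) *s cl_one"
    by (simp only: uI_def uI'_def cl_mul_smult_left cl_mul_smult_right rot_inv[OF card idx] vector_smult_assoc)
  ultimately show ?thesis by (simp only: c vector_smult_lid)
qed

lemma sI_inv: "(s_I p :: 'n cl) \<star> sI' p = cl_one \<and> (sI' p :: 'n cl) \<star> s_I p = cl_one"
  unfolding s_I_eq sI'_def by (rule prod_inv_list) (use uI_inv in auto)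

lemma vJ_inv: assumes "j \<in> {1..p}"
  shows "(vJ j :: 'n cl) \<star> vJ' j = cl_one \<and> (vJ' j :: 'n cl) \<star> vJ j = cl_one"
proof -
  have i1: "4*j-3 \<in> {1..4*p}" "4*j-1 \<in> {1..4*p}" "4*j-3 \<noteq> 4*j-1" using assms by auto
  have i2: "4*j \<in> {1..4*p}" "4*j-2 \<in> {1..4*p}" "4*j \<noteq> 4*j-2" using assms by auto
  note r1 = rot_inv[OF card i1] and r2 = rot_inv[OF card i2]
  have "(vJ j :: 'n cl) \<star> vJ' j = (1/4::complex) *s (rot (4*j-3) (4*j-1) \<star> (rot (4*j) (4*j-2) \<star> rot' (4*j) (4*j-2)) \<star> rot' (4*j-3) (4*j-1))"
    by (simp add: vJ_def vJ'_def cl_mul_smult_left cl_mul_smult_right vector_smult_assoc cl_assoc)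
  also have "\<dots> = cl_one" by (simp only: r1 r2 cl_mul_smult_left cl_mul_smult_right cl_mul_one vector_smult_assoc) simp
  finally have 1: "(vJ j :: 'n cl) \<star> vJ' j = cl_one" .
  have "(vJ' j :: 'n cl) \<star> vJ j = (1/4::complex) *s (rot' (4*j) (4*j-2) \<star> (rot' (4*j-3) (4*j-1) \<star> rot (4*j-3) (4*j-1)) \<star> rot (4*j) (4*j-2))"
    by (simp add: vJ_def vJ'_def cl_mul_smult_left cl_mul_smult_right vector_smult_assoc cl_assoc)
  also have "\<dots> = cl_one" by (simp only: r1 r2 cl_mul_smult_left cl_mul_smult_right cl_mul_one vector_smult_assoc) simp
  finally show ?thesis using 1 by simp
qed

lemma sJ_inv: "(s_J p :: 'n cl) \<star> sJ' p = cl_one \<and> (sJ' p :: 'n cl) \<star> s_J p = cl_one"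
  unfolding s_J_eq sJ'_def by (rule prod_inv_list) (use vJ_inv in auto)

lemma uI_comm: assumes "j \<in> {1..2*p}" "m \<in> {1..4*p}" "m \<noteq> 2*j-1" "m \<noteq> 2*j"
  shows "intw (uI j :: 'n cl) (cl_gen m) (cl_gen m)"
  unfolding uI_def by (rule intw_smult, rule rot_c[OF card]) (use assms in auto)

lemma sI_rel:
  assumes "k \<in> {1..2*p}"
  shows "intw (s_I p :: 'n cl) (cl_gen (2*k-1)) (cl_gen (2*k))"
    "intw (s_I p :: 'n cl) (cl_gen (2*k)) (- cl_gen (2*k-1))"
proof -
  have idx: "2*k-1 \<in> {1..4*p}" "2*k \<in> {1..4*p}" "2*k-1 \<noteq> 2*k" using assms by auto
  show "intw (s_I p :: 'n cl) (cl_gen (2*k-1)) (cl_gen (2*k))"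
    unfolding s_I_eq
  proof (rule prod_intw_at[of 1 k])
    fix m assume m: "1 \<le> m" "m < 2*p+1" "m \<noteq> k"
    show "intw (uI m :: 'n cl) (cl_gen (2*k-1)) (cl_gen (2*k-1)) \<and> intw (uI m :: 'n cl) (cl_gen (2*k)) (cl_gen (2*k))"
      using m assms by (auto intro!: uI_comm)
  next
    show "intw (uI k :: 'n cl) (cl_gen (2*k-1)) (cl_gen (2*k))"
      unfolding uI_def by (rule intw_smult, rule rot_a[OF card idx])
  qed (use assms in auto)
  show "intw (s_I p :: 'n cl) (cl_gen (2*k)) (- cl_gen (2*k-1))"
    unfolding s_I_eq
  proof (rule prod_intw_at[of 1 k])
    fix m assume m: "1 \<le> m" "m < 2*p+1" "m \<noteq> k"
    show "intw (uI m :: 'n cl) (cl_gen (2*k)) (cl_gen (2*k)) \<and> intw (uI m :: 'n cl) (- cl_gen (2*k-1)) (- cl_gen (2*k-1))"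
      using m assms by (auto intro!: uI_comm intw_neg)
  next
    show "intw (uI k :: 'n cl) (cl_gen (2*k)) (- cl_gen (2*k-1))"
      unfolding uI_def by (rule intw_smult, rule rot_b[OF card idx])
  qed (use assms in auto)
qed

lemma vJ_comm: assumes "j \<in> {1..p}" "m \<in> {1..4*p}" "m \<noteq> 4*j-3" "m \<noteq> 4*j-2" "m \<noteq> 4*j-1" "m \<noteq> 4*j"
  shows "intw (vJ j :: 'n cl) (cl_gen m) (cl_gen m)"
  unfolding vJ_def
  by (rule intw_smult, rule intw_mul; rule rot_c[OF card]) (use assms in auto)

lemma vJ_comm_neg: assumes "j \<in> {1..p}" "m \<in> {1..4*p}" "m \<noteq> 4*j-3" "m \<noteq> 4*j-2" "m \<noteq> 4*j-1" "m \<noteq> 4*j"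
  shows "intw (vJ j :: 'n cl) (- cl_gen m) (- cl_gen m)"
  by (rule intw_neg, rule vJ_comm[OF assms])

lemma vJ_rel: assumes "j \<in> {1..p}"
  shows "intw (vJ j :: 'n cl) (cl_gen (4*j-3)) (cl_gen (4*j-1))"
    "intw (vJ j :: 'n cl) (cl_gen (4*j-1)) (- cl_gen (4*j-3))"
    "intw (vJ j :: 'n cl) (cl_gen (4*j)) (cl_gen (4*j-2))"
    "intw (vJ j :: 'n cl) (cl_gen (4*j-2)) (- cl_gen (4*j))"
proof -
  have i1: "4*j-3 \<in> {1..4*p}" "4*j-1 \<in> {1..4*p}" "4*j-3 \<noteq> 4*j-1" using assms by auto
  have i2: "4*j \<in> {1..4*p}" "4*j-2 \<in> {1..4*p}" "4*j \<noteq> 4*j-2" using assms by auto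
  have d: "4*j-3 \<noteq> 4*j" "4*j-3 \<noteq> 4*j-2" "4*j-1 \<noteq> 4*j" "4*j-1 \<noteq> 4*j-2" using assms by auto
  show "intw (vJ j :: 'n cl) (cl_gen (4*j-3)) (cl_gen (4*j-1))"
    unfolding vJ_def
    by (rule intw_smult, rule intw_mul[OF rot_c[OF card i2(1,2) i1(1)] rot_a[OF card i1]]) (use d in auto)
  show "intw (vJ j :: 'n cl) (cl_gen (4*j-1)) (- cl_gen (4*j-3))"
    unfolding vJ_def
    by (rule intw_smult, rule intw_mul[OF rot_c[OF card i2(1,2) i1(2)] rot_b[OF card i1]]) (use d in auto)
  show "intw (vJ j :: 'n cl) (cl_gen (4*j)) (cl_gen (4*j-2))"
    unfolding vJ_def
    by (rule intw_smult, rule intw_mul[OF rot_a[OF card i2] rot_c[OF card i1(1,2) i2(2)]]) (use d in auto)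
  show "intw (vJ j :: 'n cl) (cl_gen (4*j-2)) (- cl_gen (4*j))"
    unfolding vJ_def
    by (rule intw_smult, rule intw_mul[OF rot_b[OF card i2] intw_neg[OF rot_c[OF card i1(1,2) i2(1)]]]) (use d in auto)
qed

lemma sJ_rel: assumes "j \<in> {1..p}"
  shows "intw (s_J p :: 'n cl) (cl_gen (4*j-3)) (cl_gen (4*j-1))"
    "intw (s_J p :: 'n cl) (cl_gen (4*j-1)) (- cl_gen (4*j-3))"
    "intw (s_J p :: 'n cl) (cl_gen (4*j)) (cl_gen (4*j-2))"
    "intw (s_J p :: 'n cl) (cl_gen (4*j-2)) (- cl_gen (4*j))"
  unfolding s_J_eq
  by (rule prod_intw_at[of 1 j], use assms in simp, use assms in simp,
      use assms in \<open>force intro!: vJ_comm vJ_comm_neg\<close>, rule vJ_rel[OF assms])+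

end



lemma cl_vec_add: "cl_vec (X + Y) = cl_vec X + (cl_vec Y :: 'n::finite cl)"
  by (rule cl_eqI) (simp add: cl_vec_nth)
lemma c_sR: "r *\<^sub>R (z::complex) = complex_of_real r * z" by (simp add: scaleR_conv_of_real)

lemma cl_vec_scaleR: "cl_vec (r *\<^sub>R X) = r *\<^sub>R (cl_vec X :: 'n::finite cl)"
proof (rule cl_eqI)
  fix A
  show "cl_vec (r *\<^sub>R X) $ A = (r *\<^sub>R (cl_vec X :: 'n::finite cl)) $ A"
    unfolding vector_scaleR_component by (simp add: cl_vec_nth vector_scaleR_component c_sR)
qed
lemma cl_unvec_add: "cl_unvec (x + y) = cl_unvec x + cl_unvec (y :: 'n::finite cl)"
  by (simp add: cl_unvec_def vec_eq_iff)
lemma cl_unvec_scaleR: "cl_unvec (r *\<^sub>R x) = r *\<^sub>R cl_unvec (x :: 'n::finite cl)"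
  by (simp add: cl_unvec_def vec_eq_iff)

lemma cl_vec_axis: "cl_vec (axis i 1) = (cl_blade {i} :: 'n::finite cl)"
proof (rule cl_eqI)
  fix A :: "'n set"
  show "cl_vec (axis i 1) $ A = cl_blade {i} $ A"
  proof (cases "card A = 1")
    case True
    then obtain a where a: "A = {a}" using card_1_singletonE by blast
    then show ?thesis by (auto simp: cl_vec_nth cl_blade_nth axis_def)
  next
    case False
    then have "A \<noteq> {i}" by auto
    then show ?thesis using False by (simp add: cl_vec_nth cl_blade_nth)
  qed
qed

lemma linear_R: "linear (\<lambda>X. cl_unvec (t \<star> cl_vec X \<star> (s :: 'n::{finite,linorder} cl)))"
  by (rule linearI)
     (simp_all add: cl_vec_add cl_vec_scaleR cl_mul_add_right cl_mul_add_left cl_mul_scaleR_right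
       cl_mul_scaleR_left cl_unvec_add cl_unvec_scaleR)

lemma linear_L: "linear (\<lambda>y. s \<star> (y :: 'n::{finite,linorder} cl))"
  by (rule linearI) (simp_all add: cl_mul_add_right cl_mul_scaleR_right)

lemma lin_expand:
  assumes "linear (f :: (real, 'n::finite) vec \<Rightarrow> 'b::real_vector)"
  shows "f Y = (\<Sum>i\<in>UNIV. Y $ i *\<^sub>R f (axis i 1))"
proof -
  have "Y = (\<Sum>i\<in>UNIV. Y $ i *\<^sub>R axis i 1)"
    using basis_expansion[of Y] by (simp add: scalar_mult_eq_scaleR)
  then have "f Y = f (\<Sum>i\<in>UNIV. Y $ i *\<^sub>R axis i 1)" by simp
  also have "\<dots> = (\<Sum>i\<in>UNIV. Y $ i *\<^sub>R f (axis i 1))"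
    using assms by (simp add: linear_sum linear_scale)
  finally show ?thesis .
qed

lemma pd_Lact:
  fixes s :: "'n::{finite,linorder} cl" and F :: "(real, 'n) vec \<Rightarrow> 'n cl"
  assumes card: "CARD('n) = 4 * p" and diff: "\<forall>X. F differentiable (at X)"
  shows "pd a (Lact s F) X = (\<Sum>b=1..4*p. Re ((cl_inv s \<star> cl_gen a \<star> s) $ {ix b}) *\<^sub>R
            (s \<star> pd b F (cl_unvec (cl_inv s \<star> cl_vec X \<star> s))))"
proof -
  define t where "t = cl_inv s"
  define R where "R = (\<lambda>X. cl_unvec (t \<star> cl_vec X \<star> s))"
  define F' where "F' = frechet_derivative F (at (R X))"
  have bR: "bounded_linear R" unfolding R_def using linear_R linear_conv_bounded_linear by blast
  have bL: "bounded_linear (\<lambda>y. s \<star> (y :: 'n cl))" using linear_L linear_conv_bounded_linear by blast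
  have dR: "(R has_derivative R) (at X)" by (rule bounded_linear_imp_has_derivative[OF bR])
  have dF: "(F has_derivative F') (at (R X))" unfolding F'_def using diff frechet_derivative_works by blast
  have dL: "((\<lambda>y. s \<star> y) has_derivative (\<lambda>y. s \<star> y)) (at (F (R X)))"
    by (rule bounded_linear_imp_has_derivative[OF bL])
  have "(((\<lambda>y. s \<star> y) \<circ> (F \<circ> R)) has_derivative ((\<lambda>y. s \<star> y) \<circ> (F' \<circ> R))) (at X)"
    using diff_chain_at[OF diff_chain_at[OF dR dF] ] dL by (simp add: diff_chain_at)
  moreover have "Lact s F = (\<lambda>y. s \<star> y) \<circ> (F \<circ> R)"
    by (simp add: fun_eq_iff Lact_def R_def t_def)
  ultimately have "frechet_derivative (Lact s F) (at X) = (\<lambda>y. s \<star> y) \<circ> (F' \<circ> R)"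
    using frechet_derivative_at by metis
  then have "pd a (Lact s F) X = s \<star> F' (R (axis (ix a) 1))" by (simp add: pd_def)
  also have "\<dots> = s \<star> (\<Sum>i\<in>UNIV. R (axis (ix a) 1) $ i *\<^sub>R F' (axis i 1))"
    using lin_expand[of F'] dF has_derivative_linear by metis
  also have "\<dots> = (\<Sum>i\<in>UNIV. R (axis (ix a) 1) $ i *\<^sub>R (s \<star> F' (axis i 1)))"
    by (simp add: cl_mul_sum_right cl_mul_scaleR_right)
  also have "\<dots> = (\<Sum>b=1..4*p. R (axis (ix a) 1) $ ix b *\<^sub>R (s \<star> F' (axis (ix b) 1)))"
    by (rule sum_ix[OF card])
  also have "\<dots> = (\<Sum>b=1..4*p. Re ((cl_inv s \<star> cl_gen a \<star> s) $ {ix b}) *\<^sub>R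
            (s \<star> pd b F (cl_unvec (cl_inv s \<star> cl_vec X \<star> s))))"
    by (simp add: R_def t_def F'_def pd_def cl_vec_axis cl_gen_def cl_unvec_def)
  finally show ?thesis .
qed



definition conjI :: "nat \<Rightarrow> 'n::{finite,linorder} cl \<Rightarrow> 'n cl" where
  "conjI p x = s_I p \<star> x \<star> sI' p"
definition conjJ :: "nat \<Rightarrow> 'n::{finite,linorder} cl \<Rightarrow> 'n cl" where
  "conjJ p x = s_J p \<star> x \<star> sJ' p"
definition conjIJ :: "nat \<Rightarrow> 'n::{finite,linorder} cl \<Rightarrow> 'n cl" where
  "conjIJ p x = s_I p \<star> conjJ p x \<star> sI' p"
definition Cm :: "nat \<Rightarrow> complex \<Rightarrow> complex \<Rightarrow> complex \<Rightarrow> complex \<Rightarrow> 'n::{finite,linorder} cl \<Rightarrow> 'n cl" where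
  "Cm p a b c d x = a *s x + b *s conjI p x + c *s conjJ p x + d *s conjIJ p x"

lemma Cm_sum: "Cm p a b c d (\<Sum>i\<in>I. f i) = (\<Sum>i\<in>I. Cm p a b c d (f i))"
  by (simp add: Cm_def conjI_def conjJ_def conjIJ_def cl_mul_sum_left cl_mul_sum_right smult_sum sum.distrib)

lemma Cm_scaleR: "Cm p a b c d (r *\<^sub>R x) = r *\<^sub>R Cm p a b c d x"
  by (simp add: Cm_def conjI_def conjJ_def conjIJ_def scaleR_cl cl_mul_smult_left cl_mul_smult_right
      vector_smult_assoc vector_add_ldistrib mult.commute)

lemma conj_comm:
  assumes "X \<star> s = s \<star> X" "X' \<star> s = s \<star> X'" "y \<star> s = s \<star> z"
  shows "(X \<star> y \<star> X') \<star> s = s \<star> (X \<star> z \<star> (X' :: 'n::{finite,linorder} cl))"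
proof -
  have "(X \<star> y \<star> X') \<star> s = X \<star> (y \<star> s) \<star> X'" by (simp add: cl_assoc assms(2))
  also have "\<dots> = (X \<star> s) \<star> z \<star> X'" by (simp add: cl_assoc assms(3))
  also have "\<dots> = s \<star> (X \<star> z \<star> X')" by (simp add: cl_assoc assms(1))
  finally show ?thesis .
qed

lemma inv_comm:
  assumes "X \<star> s = s \<star> X" "X \<star> X' = cl_one" "X' \<star> X = cl_one"
  shows "X' \<star> s = s \<star> (X' :: 'n::{finite,linorder} cl)"
proof -
  have "X' \<star> s = X' \<star> s \<star> (X \<star> X')" by (simp add: assms(2))
  also have "\<dots> = X' \<star> (X \<star> s) \<star> X'" by (simp add: cl_assoc assms(1))
  also have "\<dots> = (X' \<star> X) \<star> s \<star> X'" by (simp add: cl_assoc)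
  also have "\<dots> = s \<star> X'" by (simp add: assms(3))
  finally show ?thesis .
qed

context
  fixes p :: nat
  assumes card: "CARD('n::{finite,linorder}) = 4 * p"
begin

lemma Cm_key:
  assumes sQ: "(s :: 'n cl) \<in> spinQ p" and st: "s \<star> t = cl_one" "t \<star> s = cl_one"
  shows "Cm p a b c d (s \<star> x \<star> t) \<star> s = s \<star> Cm p a b c d x"
proof -
  have cI: "s_I p \<star> s = s \<star> s_I p" and cJ: "s_J p \<star> s = s \<star> s_J p"
    using sQ unfolding spinQ_def by auto
  have cI': "sI' p \<star> s = s \<star> sI' p" using inv_comm[OF cI] sI_inv[OF card] by blast
  have cJ': "sJ' p \<star> s = s \<star> sJ' p" using inv_comm[OF cJ] sJ_inv[OF card] by blast
  have base: "(s \<star> x \<star> t) \<star> s = s \<star> x" by (simp add: cl_assoc st)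
  have hI: "conjI p (s \<star> x \<star> t) \<star> s = s \<star> conjI p x"
    unfolding conjI_def by (rule conj_comm[OF cI cI' base])
  have hJ: "conjJ p (s \<star> x \<star> t) \<star> s = s \<star> conjJ p x"
    unfolding conjJ_def by (rule conj_comm[OF cJ cJ' base])
  have hIJ: "conjIJ p (s \<star> x \<star> t) \<star> s = s \<star> conjIJ p x"
    unfolding conjIJ_def by (rule conj_comm[OF cI cI' hJ])
  show ?thesis
    by (simp add: Cm_def cl_mul_add_left cl_mul_add_right cl_mul_smult_left cl_mul_smult_right base hI hJ hIJ)
qed

lemma w_expand:
  assumes "isvec w" "isreal (w :: 'n cl)"
  shows "w = (\<Sum>m=1..4*p. Re (w $ {ix m}) *\<^sub>R cl_gen m)"
proof -
  have "w = (\<Sum>i\<in>UNIV. w $ {i} *s cl_blade {i})" by (rule isvec_expand[OF assms(1)])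
  also have "\<dots> = (\<Sum>i\<in>UNIV. Re (w $ {i}) *\<^sub>R cl_blade {i})"
  proof (rule sum.cong[OF refl])
    fix i
    have "w $ {i} = complex_of_real (Re (w $ {i}))" using assms(2) unfolding isreal_def
      by (simp add: complex_eq_iff)
    then show "w $ {i} *s cl_blade {i} = Re (w $ {i}) *\<^sub>R cl_blade {i}"
      by (simp add: scaleR_cl)
  qed
  also have "\<dots> = (\<Sum>m=1..4*p. Re (w $ {ix m}) *\<^sub>R cl_gen m)"
    unfolding cl_gen_def by (rule sum_ix[OF card])
  finally show ?thesis .
qed

lemma invariance:
  fixes Op :: "((real, 'n) vec \<Rightarrow> 'n cl) \<Rightarrow> (real, 'n) vec \<Rightarrow> 'n cl"
  assumes dec: "\<And>G X. Op G X = (\<Sum>m=1..4*p. Cm p a b c d (cl_gen m) \<star> pd m G X)"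
    and sQ: "s \<in> spinQ p"
    and diff: "\<forall>X. F differentiable (at X)"
  shows "Op (Lact s F) = Lact s (Op F)"
proof
  fix X
  have sS: "s \<in> spin_group" using sQ unfolding spinQ_def by auto
  obtain t where st: "s \<star> t = cl_one" "t \<star> s = cl_one" and ti: "cl_inv s = t"
    and cv: "\<And>v. isvec v \<Longrightarrow> isvec (s \<star> v \<star> t)" and rs: "isreal s" and rt: "isreal t"
    using spin_props[OF sS] by metis
  define RX where "RX = cl_unvec (cl_inv s \<star> cl_vec X \<star> s)"
  define P :: "nat \<Rightarrow> 'n cl" where "P = (\<lambda>b. pd b F RX)"
  define C :: "'n cl \<Rightarrow> 'n cl" where "C = Cm p a b c d"
  define w :: "nat \<Rightarrow> 'n cl" where "w = (\<lambda>b. s \<star> cl_gen b \<star> t)"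
  have r: "\<And>m b. Re ((cl_inv s \<star> cl_gen m \<star> s) $ {ix b}) = Re (w b $ {ix m})"
    unfolding ti w_def cl_gen_def by (simp add: conj_transpose)
  have wvec: "\<And>b. isvec (w b)" unfolding w_def cl_gen_def by (rule cv, rule isvec_blade)
  have wre: "\<And>b. isreal (w b)" unfolding w_def
    by (intro isreal_mul rs rt) (simp add: isreal_def cl_gen_def cl_blade_nth)
  have "Op (Lact s F) X = (\<Sum>m=1..4*p. C (cl_gen m) \<star> (\<Sum>b=1..4*p. Re (w b $ {ix m}) *\<^sub>R (s \<star> P b)))"
    unfolding dec C_def P_def RX_def by (simp add: pd_Lact[OF card diff] r)
  also have "\<dots> = (\<Sum>m=1..4*p. \<Sum>b=1..4*p. (Re (w b $ {ix m}) *\<^sub>R C (cl_gen m)) \<star> s \<star> P b)"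
    by (simp add: cl_mul_sum_right cl_mul_scaleR_right cl_mul_scaleR_left cl_assoc)
  also have "\<dots> = (\<Sum>b=1..4*p. \<Sum>m=1..4*p. (Re (w b $ {ix m}) *\<^sub>R C (cl_gen m)) \<star> s \<star> P b)"
    by (rule sum.swap)
  also have "\<dots> = (\<Sum>b=1..4*p. C (\<Sum>m=1..4*p. Re (w b $ {ix m}) *\<^sub>R cl_gen m) \<star> s \<star> P b)"
    by (simp add: C_def Cm_sum Cm_scaleR cl_mul_sum_left)
  also have "\<dots> = (\<Sum>b=1..4*p. C (w b) \<star> s \<star> P b)"
    using w_expand[OF wvec wre] by simp
  also have "\<dots> = (\<Sum>b=1..4*p. s \<star> C (cl_gen b) \<star> P b)"
    unfolding C_def w_def using Cm_key[OF sQ st] by simp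
  also have "\<dots> = s \<star> Op F RX"
    unfolding dec C_def P_def by (simp add: cl_mul_sum_right cl_assoc)
  also have "\<dots> = Lact s (Op F) X"
    by (simp add: Lact_def RX_def)
  finally show "Op (Lact s F) X = Lact s (Op F) X" .
qed

end



lemma sum_pairs: "(\<Sum>k=1..2*(q::nat). g k) = (\<Sum>j=1..q. g (2*j-1) + g (2*j) :: 'a::comm_monoid_add)"
proof (induction q)
  case 0 then show ?case by simp
next
  case (Suc q)
  have "(\<Sum>k=1..2*Suc q. g k) = (\<Sum>k=1..2*q. g k) + g (2*q+1) + g (2*q+2)"
    by (simp add: add.assoc)
  then show ?case using Suc by (simp add: add.assoc)
qed

lemma sum_quads: "(\<Sum>m=1..4*(q::nat). h m) = (\<Sum>j=1..q. h (4*j-3) + h (4*j-2) + h (4*j-1) + h (4*j) :: 'a::comm_monoid_add)"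
proof (induction q)
  case 0 then show ?case by simp
next
  case (Suc q)
  have u: "{1..4*Suc q} = {1..4*q} \<union> {4*q+1, 4*q+2, 4*q+3, 4*q+4}" by auto
  have "(\<Sum>m=1..4*Suc q. h m) = (\<Sum>m=1..4*q. h m) + (\<Sum>m\<in>{4*q+1, 4*q+2, 4*q+3, 4*q+4}. h m)"
    unfolding u by (rule sum.union_disjoint) auto
  also have "(\<Sum>m\<in>{4*q+1, 4*q+2, 4*q+3, 4*q+4}. h m) = h (4*Suc q-3) + h (4*Suc q-2) + h (4*Suc q-1) + h (4*Suc q)"
    by (simp add: add.assoc) (simp add: add.commute)
  also have "(\<Sum>m=1..4*q. h m) = (\<Sum>j=1..q. h (4*j-3) + h (4*j-2) + h (4*j-1) + h (4*j))" by (rule Suc.IH)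
  also have "(\<Sum>j=1..q. h (4*j-3) + h (4*j-2) + h (4*j-1) + h (4*j)) + (h (4*Suc q-3) + h (4*Suc q-2) + h (4*Suc q-1) + h (4*Suc q))
      = (\<Sum>j=1..Suc q. h (4*j-3) + h (4*j-2) + h (4*j-1) + h (4*j))"
    by simp
  finally show ?case .
qed

lemma nat_idx: "1 \<le> (j::nat) \<Longrightarrow> 2*(2*j-1)-1 = 4*j-3 \<and> 2*(2*j-1) = 4*j-2 \<and> 2*(2*j)-1 = 4*j-1 \<and> 2*(2*j) = 4*j"
  by auto

context
  fixes p :: nat
  assumes card: "CARD('n::{finite,linorder}) = 4 * p"
begin

lemma conjI_vals: assumes "j \<in> {1..p}"
  shows "conjI p (cl_gen (4*j-3)) = (cl_gen (4*j-2) :: 'n cl)"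
    "conjI p (cl_gen (4*j-2)) = - (cl_gen (4*j-3) :: 'n cl)"
    "conjI p (cl_gen (4*j-1)) = (cl_gen (4*j) :: 'n cl)"
    "conjI p (cl_gen (4*j)) = - (cl_gen (4*j-1) :: 'n cl)"
proof -
  have k1: "2*j-1 \<in> {1..2*p}" "2*j \<in> {1..2*p}" using assms by auto
  have n: "2*(2*j-1)-1 = 4*j-3" "2*(2*j-1) = 4*j-2" "2*(2*j)-1 = 4*j-1" "2*(2*j) = 4*j" using assms by auto
  have m: "4*j-2-1 = 4*j-3" by simp
  have inv: "(s_I p :: 'n cl) \<star> sI' p = cl_one" using sI_inv[OF card] by blast
  have r1: "intw (s_I p :: 'n cl) (cl_gen (4*j-3)) (cl_gen (4*j-2))"
    "intw (s_I p :: 'n cl) (cl_gen (4*j-2)) (- cl_gen (4*j-3))"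
    using sI_rel[OF card k1(1)] by (simp_all only: n m)
  have r2: "intw (s_I p :: 'n cl) (cl_gen (4*j-1)) (cl_gen (4*j))"
    "intw (s_I p :: 'n cl) (cl_gen (4*j)) (- cl_gen (4*j-1))"
    using sI_rel[OF card k1(2)] by (simp_all only: n)
  show "conjI p (cl_gen (4*j-3)) = (cl_gen (4*j-2) :: 'n cl)"
    unfolding conjI_def by (rule conj_by_intw[OF r1(1) inv])
  show "conjI p (cl_gen (4*j-2)) = - (cl_gen (4*j-3) :: 'n cl)"
    unfolding conjI_def by (rule conj_by_intw[OF r1(2) inv])
  show "conjI p (cl_gen (4*j-1)) = (cl_gen (4*j) :: 'n cl)"
    unfolding conjI_def by (rule conj_by_intw[OF r2(1) inv])
  show "conjI p (cl_gen (4*j)) = - (cl_gen (4*j-1) :: 'n cl)"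
    unfolding conjI_def by (rule conj_by_intw[OF r2(2) inv])
qed

lemma conjJ_vals: assumes "j \<in> {1..p}"
  shows "conjJ p (cl_gen (4*j-3)) = (cl_gen (4*j-1) :: 'n cl)"
    "conjJ p (cl_gen (4*j-1)) = - (cl_gen (4*j-3) :: 'n cl)"
    "conjJ p (cl_gen (4*j)) = (cl_gen (4*j-2) :: 'n cl)"
    "conjJ p (cl_gen (4*j-2)) = - (cl_gen (4*j) :: 'n cl)"
proof -
  have inv: "(s_J p :: 'n cl) \<star> sJ' p = cl_one" using sJ_inv[OF card] by blast
  note r = sJ_rel[OF card assms]
  show "conjJ p (cl_gen (4*j-3)) = (cl_gen (4*j-1) :: 'n cl)"
    unfolding conjJ_def by (rule conj_by_intw[OF r(1) inv])
  show "conjJ p (cl_gen (4*j-1)) = - (cl_gen (4*j-3) :: 'n cl)"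
    unfolding conjJ_def by (rule conj_by_intw[OF r(2) inv])
  show "conjJ p (cl_gen (4*j)) = (cl_gen (4*j-2) :: 'n cl)"
    unfolding conjJ_def by (rule conj_by_intw[OF r(3) inv])
  show "conjJ p (cl_gen (4*j-2)) = - (cl_gen (4*j) :: 'n cl)"
    unfolding conjJ_def by (rule conj_by_intw[OF r(4) inv])
qed

lemma conjI_neg: "conjI p (- x) = - conjI p (x :: 'n cl)"
  by (simp add: conjI_def cl_mul_minus_left cl_mul_minus_right)

lemma conjIJ_vals: assumes "j \<in> {1..p}"
  shows "conjIJ p (cl_gen (4*j-3)) = (cl_gen (4*j) :: 'n cl)"
    "conjIJ p (cl_gen (4*j-2)) = (cl_gen (4*j-1) :: 'n cl)"
    "conjIJ p (cl_gen (4*j-1)) = - (cl_gen (4*j-2) :: 'n cl)"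
    "conjIJ p (cl_gen (4*j)) = - (cl_gen (4*j-3) :: 'n cl)"
  using conjI_vals[OF assms] conjJ_vals[OF assms]
  by (simp_all add: conjIJ_def conjI_def[symmetric] conjI_neg)

lemma Cm_vals: assumes "j \<in> {1..p}"
  shows "Cm p a b c d (cl_gen (4*j-3)) = a *s cl_gen (4*j-3) + b *s cl_gen (4*j-2) + c *s cl_gen (4*j-1) + d *s (cl_gen (4*j) :: 'n cl)"
    "Cm p a b c d (cl_gen (4*j-2)) = a *s cl_gen (4*j-2) - b *s cl_gen (4*j-3) - c *s cl_gen (4*j) + d *s (cl_gen (4*j-1) :: 'n cl)"
    "Cm p a b c d (cl_gen (4*j-1)) = a *s cl_gen (4*j-1) + b *s cl_gen (4*j) - c *s cl_gen (4*j-3) - d *s (cl_gen (4*j-2) :: 'n cl)"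
    "Cm p a b c d (cl_gen (4*j)) = a *s cl_gen (4*j) - b *s cl_gen (4*j-1) + c *s cl_gen (4*j-2) - d *s (cl_gen (4*j-3) :: 'n cl)"
  using conjI_vals[OF assms] conjJ_vals[OF assms] conjIJ_vals[OF assms]
  by (simp_all add: Cm_def vector_ssub_ldistrib vec_eq_iff algebra_simps)

end



lemmas lin_simps = cl_mul_add_left cl_mul_add_right cl_mul_diff_left cl_mul_diff_right
  cl_mul_smult_left cl_mul_smult_right cl_mul_minus_left cl_mul_minus_right

context
  fixes p :: nat
  assumes card: "CARD('n::{finite,linorder}) = 4 * p"
begin

lemma Dz_dec: "Dz p G X = (\<Sum>m=1..4*p. Cm p (1/4) (\<i>/4) 0 0 (cl_gen m) \<star> pd m G X :: 'n cl)"
proof -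
  have "Dz p G X = (\<Sum>j=1..p. witt_fd (2*j-1) \<star> dz (2*j-1) G X + witt_fd (2*j) \<star> dz (2*j) G X)"
    unfolding Dz_def by (rule sum_pairs)
  also have "\<dots> = (\<Sum>j=1..p. Cm p (1/4) (\<i>/4) 0 0 (cl_gen (4*j-3)) \<star> pd (4*j-3) G X
       + Cm p (1/4) (\<i>/4) 0 0 (cl_gen (4*j-2)) \<star> pd (4*j-2) G X
       + Cm p (1/4) (\<i>/4) 0 0 (cl_gen (4*j-1)) \<star> pd (4*j-1) G X
       + Cm p (1/4) (\<i>/4) 0 0 (cl_gen (4*j)) \<star> pd (4*j) G X)"
  proof (rule sum.cong[OF refl])
    fix j assume j: "j \<in> {1..p}"
    have n: "2*(2*j-1)-1 = 4*j-3" "2*(2*j-1) = 4*j-2" "2*(2*j)-1 = 4*j-1" "2*(2*j) = 4*j" using j by auto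
    have m: "4*j-2-1 = 4*j-3" by simp
    show "witt_fd (2*j-1) \<star> dz (2*j-1) G X + witt_fd (2*j) \<star> dz (2*j) G X =
      Cm p (1/4) (\<i>/4) 0 0 (cl_gen (4*j-3)) \<star> pd (4*j-3) G X
       + Cm p (1/4) (\<i>/4) 0 0 (cl_gen (4*j-2)) \<star> pd (4*j-2) G X
       + Cm p (1/4) (\<i>/4) 0 0 (cl_gen (4*j-1)) \<star> pd (4*j-1) G X
       + Cm p (1/4) (\<i>/4) 0 0 (cl_gen (4*j)) \<star> pd (4*j) G X"
    proof -
      define ea :: "'n cl" where "ea = cl_gen (4*j-3)"
      define eb :: "'n cl" where "eb = cl_gen (4*j-2)"
      define ec :: "'n cl" where "ec = cl_gen (4*j-1)"
      define ed :: "'n cl" where "ed = cl_gen (4*j)"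
      define pa :: "'n cl" where "pa = pd (4*j-3) G X"
      define pb :: "'n cl" where "pb = pd (4*j-2) G X"
      define pc :: "'n cl" where "pc = pd (4*j-1) G X"
      define pe :: "'n cl" where "pe = pd (4*j) G X"
      show ?thesis
        unfolding Cm_vals[OF card j] witt_fd_def dz_def
        unfolding n m
        unfolding ea_def[symmetric] eb_def[symmetric] ec_def[symmetric] ed_def[symmetric]
          pa_def[symmetric] pb_def[symmetric] pc_def[symmetric] pe_def[symmetric]
        by (simp only: lin_simps) (simp add: vec_eq_iff algebra_simps)
    qed
  qed
  also have "\<dots> = (\<Sum>m=1..4*p. Cm p (1/4) (\<i>/4) 0 0 (cl_gen m) \<star> pd m G X)"
    by (rule sum_quads[symmetric])
  finally show ?thesis .
qed

lemma Dz_dag_dec: "Dz_dag p G X = (\<Sum>m=1..4*p. Cm p (-1/4) (\<i>/4) 0 0 (cl_gen m) \<star> pd m G X :: 'n cl)"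
proof -
  have "Dz_dag p G X = (\<Sum>j=1..p. witt_f (2*j-1) \<star> dzb (2*j-1) G X + witt_f (2*j) \<star> dzb (2*j) G X)"
    unfolding Dz_dag_def by (rule sum_pairs)
  also have "\<dots> = (\<Sum>j=1..p. Cm p (-1/4) (\<i>/4) 0 0 (cl_gen (4*j-3)) \<star> pd (4*j-3) G X
       + Cm p (-1/4) (\<i>/4) 0 0 (cl_gen (4*j-2)) \<star> pd (4*j-2) G X
       + Cm p (-1/4) (\<i>/4) 0 0 (cl_gen (4*j-1)) \<star> pd (4*j-1) G X
       + Cm p (-1/4) (\<i>/4) 0 0 (cl_gen (4*j)) \<star> pd (4*j) G X)"
  proof (rule sum.cong[OF refl])
    fix j assume j: "j \<in> {1..p}"
    have n: "2*(2*j-1)-1 = 4*j-3" "2*(2*j-1) = 4*j-2" "2*(2*j)-1 = 4*j-1" "2*(2*j) = 4*j" using j by auto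
    have m: "4*j-2-1 = 4*j-3" by simp
    show "witt_f (2*j-1) \<star> dzb (2*j-1) G X + witt_f (2*j) \<star> dzb (2*j) G X =
      Cm p (-1/4) (\<i>/4) 0 0 (cl_gen (4*j-3)) \<star> pd (4*j-3) G X
       + Cm p (-1/4) (\<i>/4) 0 0 (cl_gen (4*j-2)) \<star> pd (4*j-2) G X
       + Cm p (-1/4) (\<i>/4) 0 0 (cl_gen (4*j-1)) \<star> pd (4*j-1) G X
       + Cm p (-1/4) (\<i>/4) 0 0 (cl_gen (4*j)) \<star> pd (4*j) G X"
    proof -
      define ea :: "'n cl" where "ea = cl_gen (4*j-3)"
      define eb :: "'n cl" where "eb = cl_gen (4*j-2)"
      define ec :: "'n cl" where "ec = cl_gen (4*j-1)"
      define ed :: "'n cl" where "ed = cl_gen (4*j)"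
      define pa :: "'n cl" where "pa = pd (4*j-3) G X"
      define pb :: "'n cl" where "pb = pd (4*j-2) G X"
      define pc :: "'n cl" where "pc = pd (4*j-1) G X"
      define pe :: "'n cl" where "pe = pd (4*j) G X"
      show ?thesis
        unfolding Cm_vals[OF card j] witt_f_def dzb_def
        unfolding n m
        unfolding ea_def[symmetric] eb_def[symmetric] ec_def[symmetric] ed_def[symmetric]
          pa_def[symmetric] pb_def[symmetric] pc_def[symmetric] pe_def[symmetric]
        by (simp only: lin_simps) (simp add: vec_eq_iff algebra_simps)
    qed
  qed
  also have "\<dots> = (\<Sum>m=1..4*p. Cm p (-1/4) (\<i>/4) 0 0 (cl_gen m) \<star> pd m G X)"
    by (rule sum_quads[symmetric])
  finally show ?thesis .
qed

lemma Dz_J_dec: "Dz_J p G X = (\<Sum>m=1..4*p. Cm p 0 0 (1/4) (-\<i>/4) (cl_gen m) \<star> pd m G X :: 'n cl)"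
proof -
  have "Dz_J p G X = (\<Sum>j=1..p. witt_f (2*j-1) \<star> dz (2*j) G X - witt_f (2*j) \<star> dz (2*j-1) G X)"
    unfolding Dz_J_def by (rule refl)
  also have "\<dots> = (\<Sum>j=1..p. Cm p 0 0 (1/4) (-\<i>/4) (cl_gen (4*j-3)) \<star> pd (4*j-3) G X
       + Cm p 0 0 (1/4) (-\<i>/4) (cl_gen (4*j-2)) \<star> pd (4*j-2) G X
       + Cm p 0 0 (1/4) (-\<i>/4) (cl_gen (4*j-1)) \<star> pd (4*j-1) G X
       + Cm p 0 0 (1/4) (-\<i>/4) (cl_gen (4*j)) \<star> pd (4*j) G X)"
  proof (rule sum.cong[OF refl])
    fix j assume j: "j \<in> {1..p}"
    have n: "2*(2*j-1)-1 = 4*j-3" "2*(2*j-1) = 4*j-2" "2*(2*j)-1 = 4*j-1" "2*(2*j) = 4*j" using j by auto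
    have m: "4*j-2-1 = 4*j-3" by simp
    show "witt_f (2*j-1) \<star> dz (2*j) G X - witt_f (2*j) \<star> dz (2*j-1) G X =
      Cm p 0 0 (1/4) (-\<i>/4) (cl_gen (4*j-3)) \<star> pd (4*j-3) G X
       + Cm p 0 0 (1/4) (-\<i>/4) (cl_gen (4*j-2)) \<star> pd (4*j-2) G X
       + Cm p 0 0 (1/4) (-\<i>/4) (cl_gen (4*j-1)) \<star> pd (4*j-1) G X
       + Cm p 0 0 (1/4) (-\<i>/4) (cl_gen (4*j)) \<star> pd (4*j) G X"
    proof -
      define ea :: "'n cl" where "ea = cl_gen (4*j-3)"
      define eb :: "'n cl" where "eb = cl_gen (4*j-2)"
      define ec :: "'n cl" where "ec = cl_gen (4*j-1)"
      define ed :: "'n cl" where "ed = cl_gen (4*j)"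
      define pa :: "'n cl" where "pa = pd (4*j-3) G X"
      define pb :: "'n cl" where "pb = pd (4*j-2) G X"
      define pc :: "'n cl" where "pc = pd (4*j-1) G X"
      define pe :: "'n cl" where "pe = pd (4*j) G X"
      show ?thesis
        unfolding Cm_vals[OF card j] witt_f_def dz_def
        unfolding n m
        unfolding ea_def[symmetric] eb_def[symmetric] ec_def[symmetric] ed_def[symmetric]
          pa_def[symmetric] pb_def[symmetric] pc_def[symmetric] pe_def[symmetric]
        by (simp only: lin_simps) (simp add: vec_eq_iff algebra_simps)
    qed
  qed
  also have "\<dots> = (\<Sum>m=1..4*p. Cm p 0 0 (1/4) (-\<i>/4) (cl_gen m) \<star> pd m G X)"
    by (rule sum_quads[symmetric])
  finally show ?thesis .
qed

lemma Dz_dag_J_dec: "Dz_dag_J p G X = (\<Sum>m=1..4*p. Cm p 0 0 (-1/4) (-\<i>/4) (cl_gen m) \<star> pd m G X :: 'n cl)"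
proof -
  have "Dz_dag_J p G X = (\<Sum>j=1..p. witt_fd (2*j-1) \<star> dzb (2*j) G X - witt_fd (2*j) \<star> dzb (2*j-1) G X)"
    unfolding Dz_dag_J_def by (rule refl)
  also have "\<dots> = (\<Sum>j=1..p. Cm p 0 0 (-1/4) (-\<i>/4) (cl_gen (4*j-3)) \<star> pd (4*j-3) G X
       + Cm p 0 0 (-1/4) (-\<i>/4) (cl_gen (4*j-2)) \<star> pd (4*j-2) G X
       + Cm p 0 0 (-1/4) (-\<i>/4) (cl_gen (4*j-1)) \<star> pd (4*j-1) G X
       + Cm p 0 0 (-1/4) (-\<i>/4) (cl_gen (4*j)) \<star> pd (4*j) G X)"
  proof (rule sum.cong[OF refl])
    fix j assume j: "j \<in> {1..p}"
    have n: "2*(2*j-1)-1 = 4*j-3" "2*(2*j-1) = 4*j-2" "2*(2*j)-1 = 4*j-1" "2*(2*j) = 4*j" using j by auto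
    have m: "4*j-2-1 = 4*j-3" by simp
    show "witt_fd (2*j-1) \<star> dzb (2*j) G X - witt_fd (2*j) \<star> dzb (2*j-1) G X =
      Cm p 0 0 (-1/4) (-\<i>/4) (cl_gen (4*j-3)) \<star> pd (4*j-3) G X
       + Cm p 0 0 (-1/4) (-\<i>/4) (cl_gen (4*j-2)) \<star> pd (4*j-2) G X
       + Cm p 0 0 (-1/4) (-\<i>/4) (cl_gen (4*j-1)) \<star> pd (4*j-1) G X
       + Cm p 0 0 (-1/4) (-\<i>/4) (cl_gen (4*j)) \<star> pd (4*j) G X"
    proof -
      define ea :: "'n cl" where "ea = cl_gen (4*j-3)"
      define eb :: "'n cl" where "eb = cl_gen (4*j-2)"
      define ec :: "'n cl" where "ec = cl_gen (4*j-1)"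
      define ed :: "'n cl" where "ed = cl_gen (4*j)"
      define pa :: "'n cl" where "pa = pd (4*j-3) G X"
      define pb :: "'n cl" where "pb = pd (4*j-2) G X"
      define pc :: "'n cl" where "pc = pd (4*j-1) G X"
      define pe :: "'n cl" where "pe = pd (4*j) G X"
      show ?thesis
        unfolding Cm_vals[OF card j] witt_fd_def dzb_def
        unfolding n m
        unfolding ea_def[symmetric] eb_def[symmetric] ec_def[symmetric] ed_def[symmetric]
          pa_def[symmetric] pb_def[symmetric] pc_def[symmetric] pe_def[symmetric]
        by (simp only: lin_simps) (simp add: vec_eq_iff algebra_simps)
    qed
  qed
  also have "\<dots> = (\<Sum>m=1..4*p. Cm p 0 0 (-1/4) (-\<i>/4) (cl_gen m) \<star> pd m G X)"
    by (rule sum_quads[symmetric])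
  finally show ?thesis .
qed


end

theorem proposition3:
  fixes p :: nat and s :: "'n::{finite,linorder} cl" and F :: "(real, 'n) vec \<Rightarrow> 'n cl"
  assumes "CARD('n) = 4 * p"
    and "s \<in> spinQ p"
    and "\<forall>X. F X \<in> spinor_space p"
    and "\<forall>X. F differentiable (at X)"
  shows "Dz p (Lact s F) = Lact s (Dz p F)
       \<and> Dz_dag p (Lact s F) = Lact s (Dz_dag p F)
       \<and> Dz_J p (Lact s F) = Lact s (Dz_J p F)
       \<and> Dz_dag_J p (Lact s F) = Lact s (Dz_dag_J p F)"
proof (intro conjI)
  show "Dz p (Lact s F) = Lact s (Dz p F)"
    by (rule invariance[OF assms(1) Dz_dec[OF assms(1)] assms(2) assms(4)])
  show "Dz_dag p (Lact s F) = Lact s (Dz_dag p F)"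
    by (rule invariance[OF assms(1) Dz_dag_dec[OF assms(1)] assms(2) assms(4)])
  show "Dz_J p (Lact s F) = Lact s (Dz_J p F)"
    by (rule invariance[OF assms(1) Dz_J_dec[OF assms(1)] assms(2) assms(4)])
  show "Dz_dag_J p (Lact s F) = Lact s (Dz_dag_J p F)"
    by (rule invariance[OF assms(1) Dz_dag_J_dec[OF assms(1)] assms(2) assms(4)])
qed


end
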